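(* For any injective homomorphism of Thompson's group $F$ into a totally disconnected locally compact group $H$, the image of $F$ intersects every compact open subgroup of $H$ trivially. In particular, if $F$ acts faithfully on a connected locally finite graph, then the action on the set of vertices is free.
   Context: Thompson's group $F$ is the group of orientation-preserving homeomorphisms of $[0,1]$ that are piecewise linear with finitely many breakpoints, all at dyadic rationals, and all slopes integer powers of $2$. *)

theory Defs
  imports "HOL-Analysis.Analysis" "HOL-Algebra.Group_Action"
begin

definition dyadic :: "real \<Rightarrow> bool" where
  "dyadic x \<longleftrightarrow> (\<exists>(m::int) (k::nat). x = real_of_int m / 2 ^ k)"

definition thompson_F_set :: "(real \<Rightarrow> real) set" where
  "thompson_F_set = {f.
     (\<forall>x. x \<notin> {0..1} \<longrightarrow> f x = x) \<and>
     continuous_on {0..1} f \<and> strict_mono_on {0..1} f \<and> f ` {0..1} = {0..1} \<and>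
     (\<exists>bs::real list. length bs \<ge> 2 \<and> sorted_wrt (<) bs \<and> hd bs = 0 \<and> last bs = 1 \<and>
        (\<forall>b\<in>set bs. dyadic b) \<and>
        (\<forall>i. Suc i < length bs \<longrightarrow>
           (\<exists>k::int. \<forall>x\<in>{bs ! i .. bs ! Suc i}. f x = f (bs ! i) + 2 powi k * (x - bs ! i))))}"

definition Thompson_F :: "(real \<Rightarrow> real) monoid" where
  "Thompson_F = \<lparr>carrier = thompson_F_set, mult = (\<circ>), one = id\<rparr>"

definition totally_disconnected_space :: "'a topology \<Rightarrow> bool" where
  "totally_disconnected_space T \<longleftrightarrow>
     (\<forall>S. connectedin T S \<longrightarrow> (\<exists>a. S \<subseteq> {a}))"

definition tdlc_group :: "('a, 'b) monoid_scheme \<Rightarrow> 'a topology \<Rightarrow> bool" where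
  "tdlc_group G T \<longleftrightarrow> group G \<and> topspace T = carrier G \<and>
     continuous_map (prod_topology T T) T (\<lambda>(x, y). x \<otimes>\<^bsub>G\<^esub> y) \<and>
     continuous_map T T (\<lambda>x. inv\<^bsub>G\<^esub> x) \<and>
     Hausdorff_space T \<and> locally_compact_space T \<and> totally_disconnected_space T"

definition compact_open_subgroup :: "'a set \<Rightarrow> ('a, 'b) monoid_scheme \<Rightarrow> 'a topology \<Rightarrow> bool" where
  "compact_open_subgroup K G T \<longleftrightarrow> subgroup K G \<and> openin T K \<and> compactin T K"

definition graph_reachable :: "'v set \<Rightarrow> ('v \<Rightarrow> 'v \<Rightarrow> bool) \<Rightarrow> 'v \<Rightarrow> 'v \<Rightarrow> bool" where
  "graph_reachable V Ed u w \<longleftrightarrow>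
     (\<exists>p. p \<noteq> [] \<and> hd p = u \<and> last p = w \<and> set p \<subseteq> V \<and>
          (\<forall>i. Suc i < length p \<longrightarrow> Ed (p ! i) (p ! Suc i)))"

definition connected_locfin_graph :: "'v set \<Rightarrow> ('v \<Rightarrow> 'v \<Rightarrow> bool) \<Rightarrow> bool" where
  "connected_locfin_graph V Ed \<longleftrightarrow>
     V \<noteq> {} \<and>
     (\<forall>u w. Ed u w \<longrightarrow> u \<in> V \<and> w \<in> V) \<and>
     (\<forall>u w. Ed u w \<longrightarrow> Ed w u) \<and> (\<forall>u. \<not> Ed u u) \<and>
     (\<forall>u\<in>V. finite {w. Ed u w}) \<and>
     (\<forall>u\<in>V. \<forall>w\<in>V. graph_reachable V Ed u w)"

definition graph_action :: "('g, 'c) monoid_scheme \<Rightarrow> 'v set \<Rightarrow> ('v \<Rightarrow> 'v \<Rightarrow> bool) \<Rightarrow> ('g \<Rightarrow> 'v \<Rightarrow> 'v) \<Rightarrow> bool" where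
  "graph_action G V Ed \<phi> \<longleftrightarrow> group_action G V \<phi> \<and>
     (\<forall>g\<in>carrier G. \<forall>u\<in>V. \<forall>w\<in>V. Ed u w \<longleftrightarrow> Ed (\<phi> g u) (\<phi> g w))"

end

theory Submission
  imports Defs
begin



lemma dyadic_int [simp]: "dyadic (real_of_int m)"
  unfolding dyadic_def by (rule exI[of _ m], rule exI[of _ 0]) simp

lemma dyadic_0 [simp]: "dyadic 0" and dyadic_1 [simp]: "dyadic 1"
  using dyadic_int[of 0] dyadic_int[of 1] by simp_all

lemma dyadic_add: assumes "dyadic x" "dyadic y" shows "dyadic (x + y)"
proof -
  obtain m1 k1 m2 k2 where x: "x = real_of_int m1 / 2 ^ k1" and y: "y = real_of_int m2 / 2 ^ k2"
    using assms unfolding dyadic_def by blast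
  have "x + y = real_of_int (m1 * 2 ^ k2 + m2 * 2 ^ k1) / 2 ^ (k1 + k2)"
    unfolding x y by (simp add: field_simps power_add)
  then show ?thesis unfolding dyadic_def by blast
qed

lemma dyadic_uminus: assumes "dyadic x" shows "dyadic (- x)"
proof -
  obtain m k where x: "x = real_of_int m / 2 ^ k" using assms unfolding dyadic_def by blast
  have "- x = real_of_int (- m) / 2 ^ k" unfolding x by simp
  then show ?thesis unfolding dyadic_def by blast
qed

lemma dyadic_diff: "dyadic x \<Longrightarrow> dyadic y \<Longrightarrow> dyadic (x - y)"
  using dyadic_add[of x "-y"] dyadic_uminus[of y] by simp

lemma dyadic_powi_mult: assumes "dyadic x" shows "dyadic (2 powi k * x)"
proof -
  obtain m j where x: "x = real_of_int m / 2 ^ j" using assms unfolding dyadic_def by blast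
  show ?thesis
  proof (cases "k \<ge> 0")
    case True
    then have "2 powi k * x = real_of_int (m * 2 ^ nat k) / 2 ^ j"
      unfolding x by (simp add: power_int_def)
    then show ?thesis unfolding dyadic_def by blast
  next
    case False
    then have "2 powi k * x = real_of_int m / 2 ^ (j + nat (- k))"
      unfolding x by (simp add: power_int_def power_add field_simps)
    then show ?thesis unfolding dyadic_def by blast
  qed
qed

lemma dyadic_half_pow: "dyadic (1 / 2 ^ n)"
  unfolding dyadic_def by (rule exI[of _ 1], rule exI[of _ n]) simp

definition homeo01 :: "(real \<Rightarrow> real) \<Rightarrow> bool" where
  "homeo01 f \<longleftrightarrow> (\<forall>x. x \<notin> {0..1} \<longrightarrow> f x = x) \<and>
     continuous_on {0..1} f \<and> strict_mono_on {0..1} f \<and> f ` {0..1} = {0..1}"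

definition affB :: "real set \<Rightarrow> (real \<Rightarrow> real) \<Rightarrow> bool" where
  "affB B f \<longleftrightarrow> (\<forall>x y. 0 \<le> x \<and> x < y \<and> y \<le> 1 \<and> (\<forall>b\<in>B. b \<le> x \<or> y \<le> b) \<longrightarrow>
      (\<exists>k::int. \<forall>z\<in>{x..y}. f z = f x + 2 powi k * (z - x)))"

definition PLD :: "(real \<Rightarrow> real) \<Rightarrow> bool" where
  "PLD f \<longleftrightarrow> homeo01 f \<and> (\<exists>B. finite B \<and> B \<subseteq> {0..1} \<and> 0 \<in> B \<and> 1 \<in> B \<and>
      (\<forall>b\<in>B. dyadic b \<and> dyadic (f b)) \<and> affB B f)"

lemma homeo01_0: assumes "homeo01 f" shows "f 0 = 0"
proof -
  have im: "f ` {0..1} = {0..1}" and sm: "strict_mono_on {0..1} f" using assms by (auto simp: homeo01_def)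
  obtain y where y: "y \<in> {0..1}" "f y = 0" using im by (metis atLeastAtMost_iff imageE order_refl zero_le_one)
  have "f 0 \<in> {0..1}" using im by auto
  show ?thesis
  proof (cases "y = 0")
    case False
    then have "f 0 < f y" using sm y by (intro strict_mono_onD[OF sm]) auto
    then show ?thesis using y \<open>f 0 \<in> {0..1}\<close> by auto
  qed (use y in auto)
qed

lemma homeo01_1: assumes "homeo01 f" shows "f 1 = 1"
proof -
  have im: "f ` {0..1} = {0..1}" and sm: "strict_mono_on {0..1} f" using assms by (auto simp: homeo01_def)
  obtain y where y: "y \<in> {0..1}" "f y = 1" using im by (metis atLeastAtMost_iff imageE order_refl zero_le_one)
  have "f 1 \<in> {0..1}" using im by auto
  show ?thesis
  proof (cases "y = 1")
    case False
    then have "f y < f 1" using sm y by (intro strict_mono_onD[OF sm]) auto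
    then show ?thesis using y \<open>f 1 \<in> {0..1}\<close> by auto
  qed (use y in auto)
qed

lemma homeo01_in01: "homeo01 f \<Longrightarrow> x \<in> {0..1} \<Longrightarrow> f x \<in> {0..1}"
  unfolding homeo01_def by blast

lemma homeo01_less: assumes "homeo01 f" "x < y" shows "f x < f y"
proof -
  have out: "\<And>x. x \<notin> {0..1} \<Longrightarrow> f x = x" and sm: "strict_mono_on {0..1} f"
    using assms by (auto simp: homeo01_def)
  have inn: "\<And>x. x \<in> {0..1} \<Longrightarrow> f x \<in> {0..1}" using homeo01_in01[OF assms(1)] by blast
  show ?thesis
  proof (cases "x \<in> {0..1}")
    case xi: True
    show ?thesis
    proof (cases "y \<in> {0..1}")
      case True then show ?thesis using xi sm assms(2) unfolding strict_mono_on_def by blast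
    next
      case False then have "y > 1" using xi assms(2) by auto
      then show ?thesis using out[OF False] inn[OF xi] by auto
    qed
  next
    case xo: False
    show ?thesis
    proof (cases "y \<in> {0..1}")
      case True then have "x < 0" using xo assms(2) by auto
      then show ?thesis using out[OF xo] inn[OF True] by auto
    next
      case False then show ?thesis using out[OF xo] out[OF False] assms(2) by simp
    qed
  qed
qed

lemma homeo01_le_iff: "homeo01 f \<Longrightarrow> f x \<le> f y \<longleftrightarrow> x \<le> y"
  using homeo01_less[of f x y] homeo01_less[of f y x] by (cases "x < y"; cases "y < x") auto

lemma homeo01_less_iff: "homeo01 f \<Longrightarrow> f x < f y \<longleftrightarrow> x < y"
  using homeo01_less[of f x y] homeo01_less[of f y x] by (cases "x < y"; cases "y < x") auto

lemma homeo01_inj: "homeo01 f \<Longrightarrow> inj f"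
  by (metis homeo01_less injI linorder_neqE_linordered_idom order_less_irrefl)

lemma homeo01_surj: assumes "homeo01 f" shows "surj f"
proof -
  have "y \<in> range f" for y
  proof (cases "y \<in> {0..1}")
    case True
    then have "y \<in> f ` {0..1}" using assms unfolding homeo01_def by simp
    then show ?thesis by blast
  next
    case False then show ?thesis using assms unfolding homeo01_def by (metis rangeI)
  qed
  then show ?thesis by auto
qed

lemma homeo01_bij: "homeo01 f \<Longrightarrow> bij f"
  by (simp add: bij_def homeo01_inj homeo01_surj)




lemma thompson_F_set_iff: "f \<in> thompson_F_set \<longleftrightarrow> homeo01 f \<and>
     (\<exists>bs::real list. length bs \<ge> 2 \<and> sorted_wrt (<) bs \<and> hd bs = 0 \<and> last bs = 1 \<and>
        (\<forall>b\<in>set bs. dyadic b) \<and>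
        (\<forall>i. Suc i < length bs \<longrightarrow>
           (\<exists>k::int. \<forall>x\<in>{bs ! i .. bs ! Suc i}. f x = f (bs ! i) + 2 powi k * (x - bs ! i))))"
  unfolding thompson_F_set_def homeo01_def by blast

lemma list_to_PLD:
  assumes h: "homeo01 f" and len: "length bs \<ge> 2" and sw: "sorted_wrt (<) bs" and hd: "hd bs = 0"
    and la: "last bs = 1" and dy: "\<forall>b\<in>set bs. dyadic b"
    and sl: "\<forall>i. Suc i < length bs \<longrightarrow>
           (\<exists>k::int. \<forall>x\<in>{bs ! i .. bs ! Suc i}. f x = f (bs ! i) + 2 powi k * (x - bs ! i))"
  shows "PLD f"
proof -
  have ne: "bs \<noteq> []" using len by auto
  have b0: "bs ! 0 = 0" using hd ne by (simp add: hd_conv_nth)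
  have bl: "bs ! (length bs - 1) = 1" using la ne by (simp add: last_conv_nth)
  have bnd: "0 \<le> bs ! j \<and> bs ! j \<le> 1" if "j < length bs" for j
  proof
    show "0 \<le> bs ! j"
    proof (cases "j = 0")
      case False then show ?thesis using sorted_wrt_nth_less[OF sw, of 0 j] that b0 by simp
    qed (use b0 in simp)
    show "bs ! j \<le> 1"
    proof (cases "j = length bs - 1")
      case False
      then have "j < length bs - 1" using that by simp
      moreover have "length bs - 1 < length bs" using ne by simp
      ultimately show ?thesis using sorted_wrt_nth_less[OF sw, of j "length bs - 1"] that bl by simp
    qed (use bl in simp)
  qed
  have fdy: "i < length bs \<longrightarrow> dyadic (f (bs ! i))" for i
  proof (induction i)
    case 0 then show ?case using b0 homeo01_0[OF h] by simp
  next
    case (Suc i)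
    show ?case
    proof
      assume a: "Suc i < length bs"
      then obtain k where k: "\<forall>x\<in>{bs ! i .. bs ! Suc i}. f x = f (bs ! i) + 2 powi k * (x - bs ! i)"
        using sl by blast
      have "bs ! i < bs ! Suc i" using sorted_wrt_nth_less[OF sw, of i "Suc i"] a by simp
      then have "bs ! Suc i \<in> {bs ! i .. bs ! Suc i}" by simp
      then have "f (bs ! Suc i) = f (bs ! i) + 2 powi k * (bs ! Suc i - bs ! i)" using k by blast
      moreover have "dyadic (bs ! Suc i)" "dyadic (bs ! i)" using dy a by auto
      ultimately show "dyadic (f (bs ! Suc i))" using Suc a
        using dyadic_add dyadic_diff dyadic_powi_mult Suc_lessD by presburger
    qed
  qed
  have aff: "affB (set bs) f"
    unfolding affB_def
  proof (intro allI impI)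
    fix x y assume xy: "0 \<le> x \<and> x < y \<and> y \<le> 1 \<and> (\<forall>b\<in>set bs. b \<le> x \<or> y \<le> b)"
    define I where "I = {i. i < length bs \<and> bs ! i \<le> x}"
    have fI: "finite I" unfolding I_def by auto
    have "0 \<in> I" unfolding I_def using ne b0 xy by auto
    define i where "i = Max I"
    have iI: "i \<in> I" unfolding i_def using fI \<open>0 \<in> I\<close> Max_in by blast
    have si: "Suc i < length bs"
    proof (rule ccontr)
      assume "\<not> Suc i < length bs"
      then have "i = length bs - 1" using iI unfolding I_def by auto
      then show False using iI bl xy unfolding I_def by auto
    qed
    have "\<not> bs ! Suc i \<le> x"
    proof
      assume "bs ! Suc i \<le> x"
      then have "Suc i \<in> I" unfolding I_def using si by auto
      then have "Suc i \<le> i" unfolding i_def using fI by simp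
      then show False by simp
    qed
    then have yle: "y \<le> bs ! Suc i" using xy si by auto
    have ixle: "bs ! i \<le> x" using iI unfolding I_def by auto
    obtain k where k: "\<forall>z\<in>{bs ! i .. bs ! Suc i}. f z = f (bs ! i) + 2 powi k * (z - bs ! i)"
      using sl si by blast
    have "\<forall>z\<in>{x..y}. f z = f x + 2 powi k * (z - x)"
    proof
      fix z assume z: "z \<in> {x..y}"
      have "z \<in> {bs ! i .. bs ! Suc i}" using z ixle yle by auto
      then have "f z = f (bs ! i) + 2 powi k * (z - bs ! i)" using k by blast
      moreover have "x \<in> {bs ! i .. bs ! Suc i}" using xy ixle yle by auto
      then have "f x = f (bs ! i) + 2 powi k * (x - bs ! i)" using k by blast
      ultimately show "f z = f x + 2 powi k * (z - x)" by (simp add: algebra_simps)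
    qed
    then show "\<exists>k::int. \<forall>z\<in>{x..y}. f z = f x + 2 powi k * (z - x)" by blast
  qed
  show ?thesis
    unfolding PLD_def
  proof (intro conjI h exI[of _ "set bs"])
    show "finite (set bs)" by simp
    show "set bs \<subseteq> {0..1}"
    proof
      fix b assume "b \<in> set bs"
      then obtain j where "j < length bs" "b = bs ! j" by (auto simp: in_set_conv_nth)
      then show "b \<in> {0..1}" using bnd by auto
    qed
    show "0 \<in> set bs" using b0 ne by (metis hd hd_in_set)
    show "1 \<in> set bs" using la ne by (metis last_in_set)
    show "\<forall>b\<in>set bs. dyadic b \<and> dyadic (f b)"
    proof
      fix b assume "b \<in> set bs"
      then obtain j where "j < length bs" "b = bs ! j" by (auto simp: in_set_conv_nth)
      then show "dyadic b \<and> dyadic (f b)" using dy fdy \<open>b \<in> set bs\<close> by auto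
    qed
    show "affB (set bs) f" by (rule aff)
  qed
qed

lemma PLD_to_carrier:
  assumes "PLD f" shows "f \<in> thompson_F_set"
proof -
  obtain B where h: "homeo01 f" and fB: "finite B" and B01: "B \<subseteq> {0..1}" and B0: "0 \<in> B"
    and B1: "1 \<in> B" and dyB: "\<forall>b\<in>B. dyadic b \<and> dyadic (f b)" and aff: "affB B f"
    using assms unfolding PLD_def by blast
  define bs where "bs = sorted_list_of_set B"
  have sb: "set bs = B" unfolding bs_def using fB by simp
  have sw: "sorted_wrt (<) bs" unfolding bs_def by simp
  have lenB: "length bs = card B" unfolding bs_def by simp
  have "card {0::real, 1} \<le> card B" using fB B0 B1 by (intro card_mono) auto
  then have len: "length bs \<ge> 2" using lenB by simp
  then have ne: "bs \<noteq> []" by auto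
  have ge0: "bs ! 0 \<le> b" if "b \<in> B" for b
  proof -
    have "b \<in> set bs" using that sb by simp
    then obtain j where j: "j < length bs" "bs ! j = b" by (auto simp: in_set_conv_nth)
    show ?thesis using sorted_wrt_nth_less[OF sw, of 0 j] j by (cases "j = 0") auto
  qed
  have hd: "hd bs = 0"
  proof -
    have "bs ! 0 \<in> B" unfolding sb[symmetric] using ne by simp
    then have "0 \<le> bs ! 0" using B01 by auto
    moreover have "bs ! 0 \<le> 0" using ge0 B0 by blast
    ultimately show ?thesis using ne by (simp add: hd_conv_nth)
  qed
  have lel: "b \<le> bs ! (length bs - 1)" if "b \<in> B" for b
  proof -
    have "b \<in> set bs" using that sb by simp
    then obtain j where j: "j < length bs" "bs ! j = b" by (auto simp: in_set_conv_nth)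
    have "length bs - 1 < length bs" using ne by simp
    show ?thesis
    proof (cases "j = length bs - 1")
      case False
      then have "j < length bs - 1" using j by linarith
      then show ?thesis using sorted_wrt_nth_less[OF sw, of j "length bs - 1"] j ne by simp
    qed (use j in simp)
  qed
  have la: "last bs = 1"
  proof -
    have "bs ! (length bs - 1) \<in> B" unfolding sb[symmetric] using ne by simp
    then have "bs ! (length bs - 1) \<le> 1" using B01 by auto
    moreover have "1 \<le> bs ! (length bs - 1)" using lel B1 by blast
    ultimately show ?thesis using ne by (simp add: last_conv_nth)
  qed
  have sl: "\<exists>k::int. \<forall>x\<in>{bs ! i .. bs ! Suc i}. f x = f (bs ! i) + 2 powi k * (x - bs ! i)"
    if si: "Suc i < length bs" for i
  proof -
    have lt: "bs ! i < bs ! Suc i" using sorted_wrt_nth_less[OF sw, of i "Suc i"] si by simp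
    have "bs ! i \<in> B" "bs ! Suc i \<in> B" unfolding sb[symmetric] using si by simp_all
    then have r: "0 \<le> bs ! i" "bs ! Suc i \<le> 1" using B01 by auto
    have gap: "\<forall>b\<in>B. b \<le> bs ! i \<or> bs ! Suc i \<le> b"
    proof
      fix b assume "b \<in> B"
      then have "b \<in> set bs" using sb by simp
      then obtain j where j: "j < length bs" "bs ! j = b" by (auto simp: in_set_conv_nth)
      show "b \<le> bs ! i \<or> bs ! Suc i \<le> b"
      proof (cases "j \<le> i")
        case True then show ?thesis using sorted_wrt_nth_less[OF sw, of j i] j si
          by (cases "j = i") auto
      next
        case False then show ?thesis using sorted_wrt_nth_less[OF sw, of "Suc i" j] j si
          by (cases "j = Suc i") auto
      qed
    qed
    show ?thesis using aff lt r gap unfolding affB_def by blast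
  qed
  have dyl: "\<forall>b\<in>set bs. dyadic b" using dyB sb by blast
  show ?thesis unfolding thompson_F_set_iff
    using h len sw hd la dyl sl by blast
qed

lemma carrier_to_PLD: assumes "f \<in> thompson_F_set" shows "PLD f"
  using assms unfolding thompson_F_set_iff using list_to_PLD by blast

lemma carrier_iff_PLD: "f \<in> thompson_F_set \<longleftrightarrow> PLD f"
  using PLD_to_carrier carrier_to_PLD by blast




abbreviation finv :: "(real \<Rightarrow> real) \<Rightarrow> real \<Rightarrow> real" where "finv f \<equiv> inv_into UNIV f"

lemma aff_at:
  assumes fB: "finite B" and B0: "0 \<in> B" and B01: "B \<subseteq> {0..1}" and aff: "affB B f"
    and x: "x \<in> {0..1}"
  shows "\<exists>a\<in>B. a \<le> x \<and> (\<exists>k::int. \<forall>z\<in>{a..x}. f z = f a + 2 powi k * (z - a))"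
proof -
  define a where "a = Max {b\<in>B. b \<le> x}"
  have ne: "0 \<in> {b\<in>B. b \<le> x}" using B0 x by auto
  have fin: "finite {b\<in>B. b \<le> x}" using fB by auto
  have aB: "a \<in> B" "a \<le> x" using Max_in[OF fin] ne unfolding a_def by blast+
  show ?thesis
  proof (cases "a = x")
    case True
    then show ?thesis using aB by (intro bexI[of _ a]) (auto intro: exI[of _ 0])
  next
    case False
    then have ax: "a < x" using aB by auto
    have gap: "\<forall>b\<in>B. b \<le> a \<or> x \<le> b"
    proof
      fix b assume "b \<in> B"
      show "b \<le> a \<or> x \<le> b"
      proof (cases "b \<le> x")
        case True then have "b \<le> a" unfolding a_def using fin \<open>b \<in> B\<close> by (intro Max_ge) auto
        then show ?thesis by simp
      qed simp
    qed
    have "0 \<le> a" using aB B01 by auto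
    then show ?thesis using aff ax gap x aB unfolding affB_def by (intro bexI[of _ a]) auto
  qed
qed

lemma PLD_dyadic: assumes "PLD f" "x \<in> {0..1}" "dyadic x" shows "dyadic (f x)"
proof -
  obtain B where fB: "finite B" and B01: "B \<subseteq> {0..1}" and B0: "0 \<in> B"
    and dyB: "\<forall>b\<in>B. dyadic b \<and> dyadic (f b)" and aff: "affB B f"
    using assms unfolding PLD_def by blast
  obtain a k where a: "a \<in> B" "a \<le> x" and k: "\<forall>z\<in>{a..x}. f z = f a + 2 powi k * (z - a)"
    using aff_at[OF fB B0 B01 aff assms(2)] by blast
  have "x \<in> {a..x}" using a by auto
  then have "f x = f a + 2 powi k * (x - a)" using k by blast
  then show ?thesis using dyB a assms(3) by (simp add: dyadic_add dyadic_diff dyadic_powi_mult)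
qed

lemma PLD_dyadic_pre: assumes "PLD f" "x \<in> {0..1}" "dyadic (f x)" shows "dyadic x"
proof -
  obtain B where fB: "finite B" and B01: "B \<subseteq> {0..1}" and B0: "0 \<in> B"
    and dyB: "\<forall>b\<in>B. dyadic b \<and> dyadic (f b)" and aff: "affB B f"
    using assms unfolding PLD_def by blast
  obtain a k where a: "a \<in> B" "a \<le> x" and k: "\<forall>z\<in>{a..x}. f z = f a + 2 powi k * (z - a)"
    using aff_at[OF fB B0 B01 aff assms(2)] by blast
  have "x \<in> {a..x}" using a by auto
  then have "f x = f a + 2 powi k * (x - a)" using k by blast
  then have "2 powi (-k) * (f x - f a) = 2 powi (-k) * 2 powi k * (x - a)" by simp
  also have "\<dots> = x - a" by (simp add: power_int_minus field_simps)
  finally have "x = a + 2 powi (-k) * (f x - f a)" by simp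
  then show ?thesis using dyB a assms(3) by (metis dyadic_add dyadic_diff dyadic_powi_mult)
qed

lemma homeo01_id: "homeo01 id"
  unfolding homeo01_def by (auto simp: strict_mono_on_def)

lemma PLD_id: "PLD id"
  unfolding PLD_def
proof (intro conjI homeo01_id exI[of _ "{0,1}"])
  show "affB {0, 1} id" unfolding affB_def by (auto intro: exI[of _ 0])
qed auto

lemma homeo01_comp: assumes f: "homeo01 f" and g: "homeo01 g" shows "homeo01 (f \<circ> g)"
proof -
  have gi: "g ` {0..1} = {0..1}" and fi: "f ` {0..1} = {0..1}" using f g by (auto simp: homeo01_def)
  have "continuous_on {0..1} (f \<circ> g)"
    using f g gi by (intro continuous_on_compose) (auto simp: homeo01_def)
  moreover have "strict_mono_on {0..1} (f \<circ> g)"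
    by (rule strict_mono_onI) (simp add: homeo01_less[OF f] homeo01_less[OF g])
  moreover have "(f \<circ> g) ` {0..1} = {0..1}" unfolding image_comp[symmetric] using fi gi by simp
  moreover have "\<forall>x. x \<notin> {0..1} \<longrightarrow> (f \<circ> g) x = x" using f g by (simp add: homeo01_def)
  ultimately show ?thesis unfolding homeo01_def by blast
qed

lemma PLD_comp: assumes f: "PLD f" and g: "PLD g" shows "PLD (f \<circ> g)"
proof -
  have hf: "homeo01 f" and hg: "homeo01 g" using f g by (auto simp: PLD_def)
  obtain Bf where fBf: "finite Bf" and Bf01: "Bf \<subseteq> {0..1}" and Bf0: "0 \<in> Bf" and Bf1: "1 \<in> Bf"
    and dyBf: "\<forall>b\<in>Bf. dyadic b \<and> dyadic (f b)" and affF: "affB Bf f"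
    using f unfolding PLD_def by blast
  obtain Bg where fBg: "finite Bg" and Bg01: "Bg \<subseteq> {0..1}" and Bg0: "0 \<in> Bg" and Bg1: "1 \<in> Bg"
    and dyBg: "\<forall>b\<in>Bg. dyadic b \<and> dyadic (g b)" and affG: "affB Bg g"
    using g unfolding PLD_def by blast
  define B where "B = Bg \<union> {x\<in>{0..1}. g x \<in> Bf}"
  have gin: "\<And>x. x \<in> {0..1} \<Longrightarrow> g x \<in> {0..1}" using homeo01_in01[OF hg] .
  have "finite (g -` Bf)" using fBf homeo01_inj[OF hg] by (simp add: finite_vimageI)
  moreover have "{x\<in>{0..1}. g x \<in> Bf} \<subseteq> g -` Bf" by auto
  ultimately have "finite {x\<in>{0..1}. g x \<in> Bf}" using finite_subset by blast
  then have fB: "finite B" unfolding B_def using fBg by simp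
  have B01: "B \<subseteq> {0..1}" using Bg01 unfolding B_def by auto
  have dyB: "\<forall>b\<in>B. dyadic b \<and> dyadic ((f \<circ> g) b)"
  proof
    fix b assume b: "b \<in> B"
    show "dyadic b \<and> dyadic ((f \<circ> g) b)"
    proof (cases "b \<in> Bg")
      case True
      then have "dyadic b" "dyadic (g b)" "g b \<in> {0..1}" using dyBg Bg01 gin by auto
      then show ?thesis using PLD_dyadic[OF f] by simp
    next
      case False
      then have "b \<in> {0..1}" "g b \<in> Bf" using b unfolding B_def by auto
      then show ?thesis using dyBf PLD_dyadic_pre[OF g] by auto
    qed
  qed
  have aff: "affB B (f \<circ> g)"
    unfolding affB_def
  proof (intro allI impI)
    fix x y assume xy: "0 \<le> x \<and> x < y \<and> y \<le> 1 \<and> (\<forall>b\<in>B. b \<le> x \<or> y \<le> b)"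
    then have "\<forall>b\<in>Bg. b \<le> x \<or> y \<le> b" unfolding B_def by auto
    then obtain kg where kg: "\<forall>z\<in>{x..y}. g z = g x + 2 powi kg * (z - x)"
      using affG xy unfolding affB_def by blast
    have gxy: "g x < g y" using homeo01_less[OF hg] xy by auto
    have g0: "0 \<le> g x" and g1: "g y \<le> 1" using gin xy by auto
    have gapf: "\<forall>c\<in>Bf. c \<le> g x \<or> g y \<le> c"
    proof
      fix c assume c: "c \<in> Bf"
      show "c \<le> g x \<or> g y \<le> c"
      proof (rule ccontr)
        assume "\<not> (c \<le> g x \<or> g y \<le> c)"
        then have cc: "g x < c" "c < g y" by auto
        obtain z where z: "c = g z" using homeo01_surj[OF hg] by (metis surjD)
        have "x < z" "z < y" using cc z homeo01_less_iff[OF hg] by auto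
        then have "z \<in> B" using z c xy unfolding B_def by auto
        then show False using xy \<open>x < z\<close> \<open>z < y\<close> by auto
      qed
    qed
    obtain kf where kf: "\<forall>u\<in>{g x..g y}. f u = f (g x) + 2 powi kf * (u - g x)"
      using affF gxy g0 g1 gapf unfolding affB_def by blast
    have "\<forall>z\<in>{x..y}. (f \<circ> g) z = (f \<circ> g) x + 2 powi (kf + kg) * (z - x)"
    proof
      fix z assume z: "z \<in> {x..y}"
      have gz: "g z \<in> {g x..g y}" using z homeo01_le_iff[OF hg] by auto
      have "g z = g x + 2 powi kg * (z - x)" using kg z by blast
      moreover have "f (g z) = f (g x) + 2 powi kf * (g z - g x)" using kf gz by blast
      ultimately show "(f \<circ> g) z = (f \<circ> g) x + 2 powi (kf + kg) * (z - x)"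
        by (simp add: power_int_add)
    qed
    then show "\<exists>k::int. \<forall>z\<in>{x..y}. (f \<circ> g) z = (f \<circ> g) x + 2 powi k * (z - x)" by blast
  qed
  show ?thesis unfolding PLD_def
    using homeo01_comp[OF hf hg] fB B01 dyB aff Bg0 Bg1 unfolding B_def by blast
qed

lemma homeo01_finv: assumes f: "homeo01 f" shows "homeo01 (finv f)"
proof -
  have bij: "bij f" using homeo01_bij[OF f] .
  have fi: "\<And>y. f (finv f y) = y" using bij by (simp add: bij_is_surj surj_f_inv_f)
  have if_: "\<And>x. finv f (f x) = x" using bij by (simp add: bij_is_inj)
  have out: "\<And>x. x \<notin> {0..1} \<Longrightarrow> f x = x" using f by (simp add: homeo01_def)
  have fin: "\<And>x. x \<in> {0..1} \<Longrightarrow> f x \<in> {0..1}" using homeo01_in01[OF f] .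
  have o1: "\<forall>y. y \<notin> {0..1} \<longrightarrow> finv f y = y" by (metis if_ out)
  have mem: "finv f y \<in> {0..1} \<longleftrightarrow> y \<in> {0..1}" for y
    by (metis fi fin out)
  have im: "finv f ` {0..1} = {0..1}"
  proof
    show "finv f ` {0..1} \<subseteq> {0..1}" using mem by auto
    show "{0..1} \<subseteq> finv f ` {0..1}"
    proof
      fix x :: real assume "x \<in> {0..1}"
      then show "x \<in> finv f ` {0..1}" using fin if_ by (metis image_eqI)
    qed
  qed
  have "continuous_on (f ` {0..1}) (finv f)"
    using f by (intro continuous_on_inv) (auto simp: homeo01_def if_)
  then have cont: "continuous_on {0..1} (finv f)" using f by (simp add: homeo01_def)
  have sm: "strict_mono_on {0..1} (finv f)"
    by (rule strict_mono_onI) (metis fi homeo01_less_iff[OF f])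
  show ?thesis unfolding homeo01_def using o1 cont sm im by blast
qed

lemma PLD_finv: assumes f: "PLD f" shows "PLD (finv f)"
proof -
  have hf: "homeo01 f" using f by (auto simp: PLD_def)
  have bij: "bij f" using homeo01_bij[OF hf] .
  have fi: "\<And>y. f (finv f y) = y" using bij by (simp add: bij_is_surj surj_f_inv_f)
  have if_: "\<And>x. finv f (f x) = x" using bij by (simp add: bij_is_inj)
  have hi: "homeo01 (finv f)" using homeo01_finv[OF hf] .
  obtain B where fB: "finite B" and B01: "B \<subseteq> {0..1}" and B0: "0 \<in> B" and B1: "1 \<in> B"
    and dyB: "\<forall>b\<in>B. dyadic b \<and> dyadic (f b)" and aff: "affB B f"
    using f unfolding PLD_def by blast
  have "f ` B \<subseteq> {0..1}" using B01 homeo01_in01[OF hf] by auto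
  moreover have "0 \<in> f ` B" using B0 homeo01_0[OF hf] by (metis image_eqI)
  moreover have "1 \<in> f ` B" using B1 homeo01_1[OF hf] by (metis image_eqI)
  moreover have "\<forall>b\<in>f ` B. dyadic b \<and> dyadic (finv f b)" using dyB if_ by auto
  moreover have "affB (f ` B) (finv f)"
    unfolding affB_def
  proof (intro allI impI)
    fix x y assume xy: "0 \<le> x \<and> x < y \<and> y \<le> 1 \<and> (\<forall>b\<in>f ` B. b \<le> x \<or> y \<le> b)"
    define x' where "x' = finv f x"
    define y' where "y' = finv f y"
    have xy': "x' < y'" using xy homeo01_less[OF hi] unfolding x'_def y'_def by auto
    have r: "0 \<le> x'" "y' \<le> 1" using homeo01_in01[OF hi] xy unfolding x'_def y'_def by auto
    have gap: "\<forall>b\<in>B. b \<le> x' \<or> y' \<le> b"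
    proof
      fix b assume "b \<in> B"
      then have "f b \<le> x \<or> y \<le> f b" using xy by auto
      then show "b \<le> x' \<or> y' \<le> b" unfolding x'_def y'_def
        by (metis fi homeo01_le_iff[OF hf])
    qed
    obtain k where k: "\<forall>z\<in>{x'..y'}. f z = f x' + 2 powi k * (z - x')"
      using aff xy' r gap unfolding affB_def by blast
    have "\<forall>z\<in>{x..y}. finv f z = finv f x + 2 powi (-k) * (z - x)"
    proof
      fix z assume z: "z \<in> {x..y}"
      have "finv f z \<in> {x'..y'}" using z homeo01_le_iff[OF hi] unfolding x'_def y'_def by auto
      then have "f (finv f z) = f x' + 2 powi k * (finv f z - x')" using k by blast
      then have "z = x + 2 powi k * (finv f z - x')" using fi unfolding x'_def by simp
      then have "2 powi (-k) * (z - x) = 2 powi (-k) * 2 powi k * (finv f z - x')" by simp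
      also have "\<dots> = finv f z - x'" by (simp add: power_int_minus field_simps)
      finally show "finv f z = finv f x + 2 powi (-k) * (z - x)" unfolding x'_def by simp
    qed
    then show "\<exists>k::int. \<forall>z\<in>{x..y}. finv f z = finv f x + 2 powi k * (z - x)" by blast
  qed
  ultimately show ?thesis unfolding PLD_def using hi fB by blast
qed

lemma carrier_F: "carrier Thompson_F = thompson_F_set"
  by (simp add: Thompson_F_def)

lemma mult_F [simp]: "x \<otimes>\<^bsub>Thompson_F\<^esub> y = x \<circ> y"
  by (simp add: Thompson_F_def)

lemma one_F [simp]: "\<one>\<^bsub>Thompson_F\<^esub> = id"
  by (simp add: Thompson_F_def)

lemma group_F: "group Thompson_F"
proof (rule groupI)
  fix x y assume "x \<in> carrier Thompson_F" "y \<in> carrier Thompson_F"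
  then show "x \<otimes>\<^bsub>Thompson_F\<^esub> y \<in> carrier Thompson_F"
    by (simp add: carrier_F carrier_iff_PLD PLD_comp)
next
  show "\<one>\<^bsub>Thompson_F\<^esub> \<in> carrier Thompson_F" by (simp add: carrier_F carrier_iff_PLD PLD_id)
next
  fix x y z show "x \<otimes>\<^bsub>Thompson_F\<^esub> y \<otimes>\<^bsub>Thompson_F\<^esub> z = x \<otimes>\<^bsub>Thompson_F\<^esub> (y \<otimes>\<^bsub>Thompson_F\<^esub> z)"
    by (simp add: comp_assoc)
next
  fix x show "\<one>\<^bsub>Thompson_F\<^esub> \<otimes>\<^bsub>Thompson_F\<^esub> x = x" by simp
next
  fix x assume x: "x \<in> carrier Thompson_F"
  then have p: "PLD x" by (simp add: carrier_F carrier_iff_PLD)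
  then have "finv x \<in> carrier Thompson_F" by (simp add: carrier_F carrier_iff_PLD PLD_finv)
  moreover have "finv x \<circ> x = id" using homeo01_bij p unfolding PLD_def by (simp add: bij_is_inj)
  ultimately show "\<exists>y\<in>carrier Thompson_F. y \<otimes>\<^bsub>Thompson_F\<^esub> x = \<one>\<^bsub>Thompson_F\<^esub>" by auto
qed

lemma inv_F: assumes "x \<in> carrier Thompson_F" shows "inv\<^bsub>Thompson_F\<^esub> x = finv x"
proof -
  interpret group Thompson_F by (rule group_F)
  have p: "PLD x" using assms by (simp add: carrier_F carrier_iff_PLD)
  then have "finv x \<in> carrier Thompson_F" by (simp add: carrier_F carrier_iff_PLD PLD_finv)
  moreover have "finv x \<circ> x = id" using homeo01_bij p unfolding PLD_def by (simp add: bij_is_inj)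
  ultimately show ?thesis using assms inv_unique' by (metis inv_equality mult_F one_F)
qed




definition bump :: "real \<Rightarrow> real \<Rightarrow> real \<Rightarrow> real" where
  "bump c L x = max (min x (max (c + (x - c) / 2) (x - L / 4))) (min (2 * x - c - L) x)"

lemma bump_eqs:
  assumes "0 < L"
  shows "x \<le> c \<Longrightarrow> bump c L x = x"
    and "c \<le> x \<Longrightarrow> x \<le> c + L/2 \<Longrightarrow> bump c L x = c + (x - c) / 2"
    and "c + L/2 \<le> x \<Longrightarrow> x \<le> c + 3*L/4 \<Longrightarrow> bump c L x = x - L/4"
    and "c + 3*L/4 \<le> x \<Longrightarrow> x \<le> c + L \<Longrightarrow> bump c L x = 2 * x - c - L"
    and "c + L \<le> x \<Longrightarrow> bump c L x = x"
  using assms unfolding bump_def by (auto simp: max_def min_def field_simps)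

lemma bump_less: assumes "0 < L" "x < y" shows "bump c L x < bump c L y"
  using assms unfolding bump_def by (auto simp: max_def min_def field_simps)

lemma bump_cont: "continuous_on S (bump c L)"
  unfolding bump_def by (intro continuous_intros) auto

lemma bump_homeo01:
  assumes L: "0 < L" and c: "0 \<le> c" and cL: "c + L \<le> 1"
  shows "homeo01 (bump c L)"
proof -
  have b0: "bump c L 0 = 0" using bump_eqs(1)[OF L] c by simp
  have b1: "bump c L 1 = 1" using bump_eqs(5)[OF L] cL by simp
  have out: "\<forall>x. x \<notin> {0..1} \<longrightarrow> bump c L x = x"
    using bump_eqs(1,5)[OF L] c cL by auto
  have sm: "strict_mono_on {0..1} (bump c L)"
    by (rule strict_mono_onI) (rule bump_less[OF L])
  have le: "bump c L x \<le> bump c L y" if "x \<le> y" for x y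
  proof (cases "x = y")
    case False then show ?thesis using that bump_less[OF L, of x y c] by simp
  qed simp
  have "bump c L ` {0..1} = {0..1}"
  proof
    show "bump c L ` {0..1} \<subseteq> {0..1}" using le b0 b1 by (force)
    show "{0..1} \<subseteq> bump c L ` {0..1}"
    proof
      fix y :: real assume y: "y \<in> {0..1}"
      obtain x where "0 \<le> x" "x \<le> 1" "bump c L x = y"
        using IVT'[of "bump c L" 0 y 1] y b0 b1 bump_cont by auto
      then show "y \<in> bump c L ` {0..1}" by auto
    qed
  qed
  then show ?thesis unfolding homeo01_def using out bump_cont sm by blast
qed

lemma bump_carrier:
  assumes L: "0 < L" and c: "0 < c" and cL: "c + L < 1" and dc: "dyadic c" and dL: "dyadic L"
  shows "bump c L \<in> carrier Thompson_F"
proof -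
  have h: "homeo01 (bump c L)" using bump_homeo01 L c cL by simp
  define bs where "bs = [0, c, c + L/2, c + 3*L/4, c + L, 1::real]"
  have len: "length bs \<ge> 2" unfolding bs_def by simp
  have sw: "sorted_wrt (<) bs" unfolding bs_def using L c cL by auto
  have dy: "\<forall>b\<in>set bs. dyadic b"
  proof -
    have d2: "dyadic (L/2)" using dyadic_powi_mult[OF dL, of "-1"] by (simp add: power_int_minus)
    have d4: "dyadic (L/4)" using dyadic_powi_mult[OF dL, of "-2"] by (simp add: power_int_minus)
    have "dyadic (3 * L / 4)" using dyadic_add[OF d2 d4] by (simp add: field_simps)
    then show ?thesis unfolding bs_def using dc dL d2 by (auto intro: dyadic_add)
  qed
  have sl: "\<exists>k::int. \<forall>x\<in>{bs ! i .. bs ! Suc i}. bump c L x = bump c L (bs ! i) + 2 powi k * (x - bs ! i)"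
    if "Suc i < length bs" for i
  proof -
    have "i = 0 \<or> i = 1 \<or> i = 2 \<or> i = 3 \<or> i = 4" using that unfolding bs_def by auto
    then show ?thesis
    proof (elim disjE)
      assume "i = 0" then show ?thesis unfolding bs_def
        using bump_eqs[OF L] c by (intro exI[of _ 0]) auto
    next
      assume "i = 1" then show ?thesis unfolding bs_def
        using bump_eqs[OF L] L by (intro exI[of _ "-1"]) (auto simp: power_int_minus)
    next
      assume "i = 2" then show ?thesis unfolding bs_def
        using bump_eqs[OF L] L by (intro exI[of _ 0]) auto
    next
      assume "i = 3" then show ?thesis unfolding bs_def
        using bump_eqs[OF L] L by (intro exI[of _ 1]) auto
    next
      assume "i = 4" then show ?thesis unfolding bs_def
        using bump_eqs[OF L] L cL by (intro exI[of _ 0]) auto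
    qed
  qed
  have hd: "hd bs = 0" and la: "last bs = 1" unfolding bs_def by simp_all
  have "bump c L \<in> thompson_F_set" unfolding thompson_F_set_iff
    using h len sw dy sl hd la by blast
  then show ?thesis by (simp add: carrier_F)
qed




definition gcomm :: "('a, 'b) monoid_scheme \<Rightarrow> 'a \<Rightarrow> 'a \<Rightarrow> 'a" where
  "gcomm G x y = x \<otimes>\<^bsub>G\<^esub> y \<otimes>\<^bsub>G\<^esub> inv\<^bsub>G\<^esub> x \<otimes>\<^bsub>G\<^esub> inv\<^bsub>G\<^esub> y"

lemma (in group) gcomm_closed [simp]: "x \<in> carrier G \<Longrightarrow> y \<in> carrier G \<Longrightarrow> gcomm G x y \<in> carrier G"
  by (simp add: gcomm_def)

lemma (in group) gcomm_one_imp: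
  assumes "x \<in> carrier G" "y \<in> carrier G" "gcomm G x y = \<one>" shows "x \<otimes> y = y \<otimes> x"
proof -
  have "x \<otimes> y = (x \<otimes> y \<otimes> inv x \<otimes> inv y) \<otimes> y \<otimes> x" using assms(1,2) by (simp add: m_assoc)
  also have "\<dots> = y \<otimes> x" using assms by (simp add: gcomm_def)
  finally show ?thesis .
qed

lemma (in group) inv_mult_cancel1 [simp]: "x \<in> carrier G \<Longrightarrow> y \<in> carrier G \<Longrightarrow> inv x \<otimes> (x \<otimes> y) = y"
  by (simp add: m_assoc[symmetric])

lemma (in group) inv_mult_cancel2 [simp]: "x \<in> carrier G \<Longrightarrow> y \<in> carrier G \<Longrightarrow> x \<otimes> (inv x \<otimes> y) = y"
  by (simp add: m_assoc[symmetric])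

lemma (in group) comm_trick:
  assumes c: "x1 \<in> carrier G" "x2 \<in> carrier G" "b \<in> carrier G"
    and c12: "(b \<otimes> inv x1 \<otimes> inv b) \<otimes> x2 = x2 \<otimes> (b \<otimes> inv x1 \<otimes> inv b)"
    and c13: "(b \<otimes> inv x1 \<otimes> inv b) \<otimes> inv (x2 \<otimes> x1) = inv (x2 \<otimes> x1) \<otimes> (b \<otimes> inv x1 \<otimes> inv b)"
    and c23: "(b \<otimes> inv x2 \<otimes> inv b) \<otimes> inv (x2 \<otimes> x1) = inv (x2 \<otimes> x1) \<otimes> (b \<otimes> inv x2 \<otimes> inv b)"
  shows "gcomm G x1 b \<otimes> gcomm G x2 b \<otimes> gcomm G (inv (x2 \<otimes> x1)) b = gcomm G x1 x2"
proof -
  define x3 where "x3 = inv (x2 \<otimes> x1)"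
  define d1 where "d1 = b \<otimes> inv x1 \<otimes> inv b"
  define d2 where "d2 = b \<otimes> inv x2 \<otimes> inv b"
  define d3 where "d3 = b \<otimes> inv x3 \<otimes> inv b"
  have [simp]: "x3 \<in> carrier G" "d1 \<in> carrier G" "d2 \<in> carrier G" "d3 \<in> carrier G"
    unfolding x3_def d1_def d2_def d3_def using c by auto
  note [simp] = c
  have e: "gcomm G x b = x \<otimes> (b \<otimes> inv x \<otimes> inv b)" if "x \<in> carrier G" for x
    using that by (simp add: gcomm_def m_assoc)
  have "gcomm G x1 b \<otimes> gcomm G x2 b \<otimes> gcomm G x3 b = x1 \<otimes> d1 \<otimes> x2 \<otimes> d2 \<otimes> x3 \<otimes> d3"
    by (simp add: e d1_def d2_def d3_def m_assoc)
  also have "\<dots> = x1 \<otimes> (d1 \<otimes> x2) \<otimes> d2 \<otimes> x3 \<otimes> d3" by (simp add: m_assoc)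
  also have "\<dots> = x1 \<otimes> (x2 \<otimes> d1) \<otimes> d2 \<otimes> x3 \<otimes> d3" using c12 unfolding d1_def by simp
  also have "\<dots> = x1 \<otimes> x2 \<otimes> d1 \<otimes> (d2 \<otimes> x3) \<otimes> d3" by (simp add: m_assoc)
  also have "\<dots> = x1 \<otimes> x2 \<otimes> d1 \<otimes> (x3 \<otimes> d2) \<otimes> d3" using c23 unfolding d2_def x3_def by simp
  also have "\<dots> = x1 \<otimes> x2 \<otimes> (d1 \<otimes> x3) \<otimes> d2 \<otimes> d3" by (simp add: m_assoc)
  also have "\<dots> = x1 \<otimes> x2 \<otimes> (x3 \<otimes> d1) \<otimes> d2 \<otimes> d3" using c13 unfolding d1_def x3_def by simp
  also have "\<dots> = (x1 \<otimes> x2 \<otimes> x3) \<otimes> (d1 \<otimes> d2 \<otimes> d3)" by (simp add: m_assoc)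
  finally have L: "gcomm G x1 b \<otimes> gcomm G x2 b \<otimes> gcomm G x3 b = (x1 \<otimes> x2 \<otimes> x3) \<otimes> (d1 \<otimes> d2 \<otimes> d3)" .
  have D: "d1 \<otimes> d2 \<otimes> d3 = \<one>"
    unfolding d1_def d2_def d3_def x3_def by (simp add: m_assoc)
  have X: "x1 \<otimes> x2 \<otimes> x3 = gcomm G x1 x2"
    unfolding x3_def gcomm_def by (simp add: inv_mult_group m_assoc)
  show ?thesis using L D X unfolding x3_def by simp
qed

lemma supp_maps:
  assumes "inj u" "\<forall>x. x \<notin> S \<longrightarrow> u x = x" "x \<in> S" shows "u x \<in> S"
proof (rule ccontr)
  assume "u x \<notin> S"
  then have "u (u x) = u x" using assms(2) by blast
  then have "u x = x" using assms(1) by (simp add: inj_eq)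
  then show False using \<open>u x \<notin> S\<close> assms(3) by simp
qed

lemma comm_disj:
  assumes "inj u" "inj v" "\<forall>x. x \<notin> S \<longrightarrow> u x = x" "\<forall>x. x \<notin> T \<longrightarrow> v x = x" "S \<inter> T = {}"
  shows "u \<circ> v = v \<circ> u"
proof
  fix x
  show "(u \<circ> v) x = (v \<circ> u) x"
  proof (cases "x \<in> S")
    case True
    then have "x \<notin> T" "u x \<in> S" using assms supp_maps[of u S x] by auto
    then have "v x = x" "v (u x) = u x" using assms by auto
    then show ?thesis by simp
  next
    case False
    note xS = False
    show ?thesis
    proof (cases "x \<in> T")
      case True
      then have "v x \<in> T" using assms supp_maps[of v T x] by auto
      then have "u x = x" "u (v x) = v x" using assms xS by auto
      then show ?thesis by simp
    next
      case False
      then show ?thesis using assms xS by simp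
    qed
  qed
qed

lemma carrier_homeo01: "g \<in> carrier Thompson_F \<Longrightarrow> homeo01 g"
  by (simp add: carrier_F carrier_iff_PLD PLD_def)

lemma carrier_inj: "g \<in> carrier Thompson_F \<Longrightarrow> inj g"
  using carrier_homeo01 homeo01_inj by blast

lemma conj_comm_F:
  assumes b: "b \<in> carrier Thompson_F" and u: "u \<in> carrier Thompson_F" and v: "v \<in> carrier Thompson_F"
    and su: "\<forall>x. x \<notin> S \<longrightarrow> u x = x" and sv: "\<forall>x. x \<notin> S \<longrightarrow> v x = x"
    and disj: "b ` S \<inter> S = {}"
  shows "(b \<otimes>\<^bsub>Thompson_F\<^esub> u \<otimes>\<^bsub>Thompson_F\<^esub> inv\<^bsub>Thompson_F\<^esub> b) \<otimes>\<^bsub>Thompson_F\<^esub> v =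
         v \<otimes>\<^bsub>Thompson_F\<^esub> (b \<otimes>\<^bsub>Thompson_F\<^esub> u \<otimes>\<^bsub>Thompson_F\<^esub> inv\<^bsub>Thompson_F\<^esub> b)"
proof -
  interpret group Thompson_F by (rule group_F)
  have dc: "b \<otimes>\<^bsub>Thompson_F\<^esub> u \<otimes>\<^bsub>Thompson_F\<^esub> inv\<^bsub>Thompson_F\<^esub> b \<in> carrier Thompson_F"
    by (intro m_closed inv_closed b u)
  have deq: "b \<otimes>\<^bsub>Thompson_F\<^esub> u \<otimes>\<^bsub>Thompson_F\<^esub> inv\<^bsub>Thompson_F\<^esub> b = b \<circ> u \<circ> finv b"
    using b by (simp add: inv_F)
  have hb: "bij b" using b carrier_homeo01 homeo01_bij by blast
  have sd: "\<forall>x. x \<notin> b ` S \<longrightarrow> (b \<circ> u \<circ> finv b) x = x"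
  proof (intro allI impI)
    fix x assume x: "x \<notin> b ` S"
    have bx: "b (finv b x) = x" using hb by (simp add: bij_is_surj surj_f_inv_f)
    then have "finv b x \<notin> S" using x by force
    then show "(b \<circ> u \<circ> finv b) x = x" using su bx by simp
  qed
  have ij: "inj (b \<circ> u \<circ> finv b)" using carrier_inj[OF dc] deq by simp
  have "(b \<circ> u \<circ> finv b) \<circ> v = v \<circ> (b \<circ> u \<circ> finv b)"
    by (rule comm_disj[OF ij carrier_inj[OF v] sd sv disj])
  then show ?thesis using deq by simp
qed




lemma supp_finv:
  assumes "inj u" "\<forall>x. x \<notin> S \<longrightarrow> u x = x" shows "\<forall>x. x \<notin> S \<longrightarrow> finv u x = x"
  using assms by (metis inv_f_f)

lemma pow_ge:
  assumes a: "a \<in> carrier Thompson_F" and ap: "p < a p"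
  shows "p \<le> (a [^]\<^bsub>Thompson_F\<^esub> (n::nat)) p \<and> (1 \<le> n \<longrightarrow> a p \<le> (a [^]\<^bsub>Thompson_F\<^esub> n) p)"
proof (induction n)
  case 0 then show ?case by simp
next
  case (Suc n)
  interpret group Thompson_F by (rule group_F)
  have ha: "homeo01 a" using a carrier_homeo01 by blast
  have eq: "(a [^]\<^bsub>Thompson_F\<^esub> Suc n) p = a ((a [^]\<^bsub>Thompson_F\<^esub> n) p)"
    using nat_pow_Suc2[OF a, of n] by simp
  have "a p \<le> a ((a [^]\<^bsub>Thompson_F\<^esub> n) p)" using Suc homeo01_le_iff[OF ha] by blast
  then show ?case using eq ap by simp
qed

lemma key:
  assumes h: "h \<in> carrier Thompson_F" and hn: "h \<noteq> id"
  shows "\<exists>a x1 x2. (a = h \<or> a = inv\<^bsub>Thompson_F\<^esub> h) \<and> x1 \<in> carrier Thompson_F \<and> x2 \<in> carrier Thompson_F \<and>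
     x1 \<otimes>\<^bsub>Thompson_F\<^esub> x2 \<noteq> x2 \<otimes>\<^bsub>Thompson_F\<^esub> x1 \<and>
     (\<forall>N::nat. 1 \<le> N \<longrightarrow>
        gcomm Thompson_F x1 (a [^]\<^bsub>Thompson_F\<^esub> N) \<otimes>\<^bsub>Thompson_F\<^esub> gcomm Thompson_F x2 (a [^]\<^bsub>Thompson_F\<^esub> N)
        \<otimes>\<^bsub>Thompson_F\<^esub> gcomm Thompson_F (inv\<^bsub>Thompson_F\<^esub> (x2 \<otimes>\<^bsub>Thompson_F\<^esub> x1)) (a [^]\<^bsub>Thompson_F\<^esub> N)
        = gcomm Thompson_F x1 x2)"
proof -
  interpret group Thompson_F by (rule group_F)
  obtain p0 where p0: "h p0 \<noteq> p0" using hn by (auto simp: fun_eq_iff)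
  have hh: "homeo01 h" using h carrier_homeo01 by blast
  obtain a p where a: "a = h \<or> a = inv\<^bsub>Thompson_F\<^esub> h" and ac: "a \<in> carrier Thompson_F" and ap: "p < a p"
  proof (cases "p0 < h p0")
    case True then show ?thesis using that[of h p0] h by simp
  next
    case False
    then have lt: "h p0 < p0" using p0 by simp
    have "(inv\<^bsub>Thompson_F\<^esub> h) (h p0) = p0" using inv_F[OF h] homeo01_inj[OF hh] by (simp add: inv_f_f)
    then show ?thesis using that[of "inv\<^bsub>Thompson_F\<^esub> h" "h p0"] h lt by simp
  qed
  have ha: "homeo01 a" using ac carrier_homeo01 by blast
  have p01: "p \<in> {0..1}" using ap ha unfolding homeo01_def by force
  have p0': "p \<noteq> 0" using ap homeo01_0[OF ha] by auto
  have p1': "p \<noteq> 1" using ap homeo01_1[OF ha] by auto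
  have pp: "0 < p" "p < 1" using p01 p0' p1' by auto
  have ap1: "a p \<le> 1" using homeo01_in01[OF ha p01] by simp
  obtain n where n: "(1/2::real)^n < (a p - p) / 3" using real_arch_pow_inv[of "(a p - p)/3" "1/2"] ap by auto
  define L where "L = (1/2::real)^n"
  have Lpos: "0 < L" unfolding L_def by simp
  have L2: "L = 1 / 2 ^ n" unfolding L_def by (simp add: power_one_over)
  have dL: "dyadic L" unfolding L2 by (rule dyadic_half_pow)
  define c where "c = real_of_int (\<lfloor>p * 2 ^ n\<rfloor> + 1) / 2 ^ n"
  have dc: "dyadic c" unfolding c_def dyadic_def by blast
  have "p * 2 ^ n < real_of_int (\<lfloor>p * 2 ^ n\<rfloor> + 1)" by linarith
  then have pc: "p < c" unfolding c_def by (simp add: field_simps)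
  have "real_of_int (\<lfloor>p * 2 ^ n\<rfloor> + 1) \<le> p * 2 ^ n + 1" by linarith
  then have "c \<le> (p * 2 ^ n + 1) / 2 ^ n" unfolding c_def by (simp add: divide_right_mono)
  then have cpL: "c \<le> p + L" unfolding L2 by (simp add: field_simps)
  have nL: "L < (a p - p) / 3" using n unfolding L_def .
  have nL3: "3 * L < a p - p" using nL by simp
  have cLap: "c + L < a p"
  proof -
    have "c + L \<le> p + 2 * L" using cpL by simp
    also have "\<dots> < a p" using nL3 Lpos by simp
    finally show ?thesis .
  qed
  have c0: "0 < c" using pc pp by simp
  have cL1: "c + L < 1" using cLap ap1 by simp
  have dL2: "dyadic (L/2)" using dyadic_powi_mult[OF dL, of "-1"] by (simp add: power_int_minus)
  define x1 where "x1 = bump c L"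
  define x2 where "x2 = bump c (L/2)"
  have x1c: "x1 \<in> carrier Thompson_F" unfolding x1_def using bump_carrier Lpos c0 cL1 dc dL by simp
  have x2c: "x2 \<in> carrier Thompson_F" unfolding x2_def using bump_carrier[of "L/2" c] Lpos c0 cL1 dc dL2 by simp
  define S where "S = {c..c+L}"
  have s1: "\<forall>x. x \<notin> S \<longrightarrow> x1 x = x" unfolding x1_def S_def using bump_eqs(1,5)[OF Lpos] by auto
  have s2: "\<forall>x. x \<notin> S \<longrightarrow> x2 x = x" unfolding x2_def S_def
  proof (intro allI impI)
    fix x assume "x \<notin> {c..c+L}"
    then have "x \<le> c \<or> c + L/2 \<le> x" using Lpos by auto
    then show "bump c (L / 2) x = x" using bump_eqs(1,5)[of "L/2"] Lpos by auto
  qed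
  define q where "q = c + L/2"
  have "x2 q = q" unfolding x2_def q_def using bump_eqs(5)[of "L/2" c "c + L/2"] Lpos by simp
  moreover have "x1 q = c + L/4" unfolding x1_def q_def using bump_eqs(2)[OF Lpos, of c "c + L/2"] Lpos by simp
  moreover have "x2 (c + L/4) = c + L/8" unfolding x2_def using bump_eqs(3)[of "L/2" c "c + L/4"] Lpos by simp
  ultimately have "(x1 \<circ> x2) q \<noteq> (x2 \<circ> x1) q" using Lpos by simp
  then have nc: "x1 \<otimes>\<^bsub>Thompson_F\<^esub> x2 \<noteq> x2 \<otimes>\<^bsub>Thompson_F\<^esub> x1" by (metis mult_F)
  have main: "gcomm Thompson_F x1 (a [^]\<^bsub>Thompson_F\<^esub> N) \<otimes>\<^bsub>Thompson_F\<^esub> gcomm Thompson_F x2 (a [^]\<^bsub>Thompson_F\<^esub> N)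
        \<otimes>\<^bsub>Thompson_F\<^esub> gcomm Thompson_F (inv\<^bsub>Thompson_F\<^esub> (x2 \<otimes>\<^bsub>Thompson_F\<^esub> x1)) (a [^]\<^bsub>Thompson_F\<^esub> N)
        = gcomm Thompson_F x1 x2" if N: "1 \<le> N" for N :: nat
  proof -
    define b where "b = a [^]\<^bsub>Thompson_F\<^esub> N"
    have bc: "b \<in> carrier Thompson_F" unfolding b_def using ac by simp
    have hb: "homeo01 b" using bc carrier_homeo01 by blast
    have bp: "a p \<le> b p" unfolding b_def using pow_ge[OF ac ap, of N] N by simp
    have disj: "b ` S \<inter> S = {}"
    proof -
      have "b s \<notin> S" if "s \<in> S" for s
      proof -
        have "p < s" using that pc unfolding S_def by auto
        then have "b p < b s" using homeo01_less[OF hb] by blast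
        then show ?thesis using bp cLap unfolding S_def by auto
      qed
      then show ?thesis by auto
    qed
    have ix1: "inv\<^bsub>Thompson_F\<^esub> x1 \<in> carrier Thompson_F" "\<forall>x. x \<notin> S \<longrightarrow> (inv\<^bsub>Thompson_F\<^esub> x1) x = x"
      using x1c apply simp using inv_F[OF x1c] supp_finv[OF carrier_inj[OF x1c] s1] by simp
    have ix2: "inv\<^bsub>Thompson_F\<^esub> x2 \<in> carrier Thompson_F" "\<forall>x. x \<notin> S \<longrightarrow> (inv\<^bsub>Thompson_F\<^esub> x2) x = x"
      using x2c apply simp using inv_F[OF x2c] supp_finv[OF carrier_inj[OF x2c] s2] by simp
    have x21a: "x2 \<otimes>\<^bsub>Thompson_F\<^esub> x1 \<in> carrier Thompson_F" by (rule m_closed[OF x2c x1c])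
    have x21b: "\<forall>x. x \<notin> S \<longrightarrow> (x2 \<otimes>\<^bsub>Thompson_F\<^esub> x1) x = x" using s1 s2 by simp
    note x21 = x21a x21b
    have ix3: "inv\<^bsub>Thompson_F\<^esub> (x2 \<otimes>\<^bsub>Thompson_F\<^esub> x1) \<in> carrier Thompson_F"
      "\<forall>x. x \<notin> S \<longrightarrow> (inv\<^bsub>Thompson_F\<^esub> (x2 \<otimes>\<^bsub>Thompson_F\<^esub> x1)) x = x"
      using x21 apply simp using inv_F[OF x21(1)] supp_finv[OF carrier_inj[OF x21(1)] x21(2)] by (simp add: comp_def)
    show ?thesis unfolding b_def[symmetric]
    proof (rule comm_trick[OF x1c x2c bc])
      show "b \<otimes>\<^bsub>Thompson_F\<^esub> inv\<^bsub>Thompson_F\<^esub> x1 \<otimes>\<^bsub>Thompson_F\<^esub> inv\<^bsub>Thompson_F\<^esub> b \<otimes>\<^bsub>Thompson_F\<^esub> x2 =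
            x2 \<otimes>\<^bsub>Thompson_F\<^esub> (b \<otimes>\<^bsub>Thompson_F\<^esub> inv\<^bsub>Thompson_F\<^esub> x1 \<otimes>\<^bsub>Thompson_F\<^esub> inv\<^bsub>Thompson_F\<^esub> b)"
        by (rule conj_comm_F[OF bc ix1(1) x2c ix1(2) s2 disj])
      show "b \<otimes>\<^bsub>Thompson_F\<^esub> inv\<^bsub>Thompson_F\<^esub> x1 \<otimes>\<^bsub>Thompson_F\<^esub> inv\<^bsub>Thompson_F\<^esub> b \<otimes>\<^bsub>Thompson_F\<^esub> inv\<^bsub>Thompson_F\<^esub> (x2 \<otimes>\<^bsub>Thompson_F\<^esub> x1) =
            inv\<^bsub>Thompson_F\<^esub> (x2 \<otimes>\<^bsub>Thompson_F\<^esub> x1) \<otimes>\<^bsub>Thompson_F\<^esub> (b \<otimes>\<^bsub>Thompson_F\<^esub> inv\<^bsub>Thompson_F\<^esub> x1 \<otimes>\<^bsub>Thompson_F\<^esub> inv\<^bsub>Thompson_F\<^esub> b)"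
        by (rule conj_comm_F[OF bc ix1(1) ix3(1) ix1(2) ix3(2) disj])
      show "b \<otimes>\<^bsub>Thompson_F\<^esub> inv\<^bsub>Thompson_F\<^esub> x2 \<otimes>\<^bsub>Thompson_F\<^esub> inv\<^bsub>Thompson_F\<^esub> b \<otimes>\<^bsub>Thompson_F\<^esub> inv\<^bsub>Thompson_F\<^esub> (x2 \<otimes>\<^bsub>Thompson_F\<^esub> x1) =
            inv\<^bsub>Thompson_F\<^esub> (x2 \<otimes>\<^bsub>Thompson_F\<^esub> x1) \<otimes>\<^bsub>Thompson_F\<^esub> (b \<otimes>\<^bsub>Thompson_F\<^esub> inv\<^bsub>Thompson_F\<^esub> x2 \<otimes>\<^bsub>Thompson_F\<^esub> inv\<^bsub>Thompson_F\<^esub> b)"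
        by (rule conj_comm_F[OF bc ix2(1) ix3(1) ix2(2) ix3(2) disj])
    qed
  qed
  show ?thesis using a x1c x2c nc main by blast
qed




declare mult_F [simp del] one_F [simp del]

lemma abstract_main:
  assumes h: "h \<in> carrier Thompson_F" and hn: "h \<noteq> id"
    and A: "\<forall>w\<in>carrier Thompson_F. w \<noteq> id \<longrightarrow> (\<exists>M. subgroup M Thompson_F \<and> w \<notin> M \<and>
       (\<forall>g\<in>carrier Thompson_F. \<exists>N::nat. 1 \<le> N \<and>
          (\<forall>m::nat. g \<otimes>\<^bsub>Thompson_F\<^esub> h [^]\<^bsub>Thompson_F\<^esub> (N * m) \<otimes>\<^bsub>Thompson_F\<^esub> inv\<^bsub>Thompson_F\<^esub> g \<in> M)))"
  shows False
proof -
  interpret group Thompson_F by (rule group_F)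
  obtain a x1 x2 where KK: "(a = h \<or> a = inv\<^bsub>Thompson_F\<^esub> h) \<and> x1 \<in> carrier Thompson_F \<and> x2 \<in> carrier Thompson_F \<and>
     x1 \<otimes>\<^bsub>Thompson_F\<^esub> x2 \<noteq> x2 \<otimes>\<^bsub>Thompson_F\<^esub> x1 \<and>
     (\<forall>N::nat. 1 \<le> N \<longrightarrow>
        gcomm Thompson_F x1 (a [^]\<^bsub>Thompson_F\<^esub> N) \<otimes>\<^bsub>Thompson_F\<^esub> gcomm Thompson_F x2 (a [^]\<^bsub>Thompson_F\<^esub> N)
        \<otimes>\<^bsub>Thompson_F\<^esub> gcomm Thompson_F (inv\<^bsub>Thompson_F\<^esub> (x2 \<otimes>\<^bsub>Thompson_F\<^esub> x1)) (a [^]\<^bsub>Thompson_F\<^esub> N)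
        = gcomm Thompson_F x1 x2)"
    using key[OF h hn] by (elim exE) (rule that)
  then have a: "a = h \<or> a = inv\<^bsub>Thompson_F\<^esub> h" and x1c: "x1 \<in> carrier Thompson_F"
    and x2c: "x2 \<in> carrier Thompson_F" and nc: "x1 \<otimes>\<^bsub>Thompson_F\<^esub> x2 \<noteq> x2 \<otimes>\<^bsub>Thompson_F\<^esub> x1"
    by blast+
  have K: "\<And>N::nat. 1 \<le> N \<Longrightarrow>
        gcomm Thompson_F x1 (a [^]\<^bsub>Thompson_F\<^esub> N) \<otimes>\<^bsub>Thompson_F\<^esub> gcomm Thompson_F x2 (a [^]\<^bsub>Thompson_F\<^esub> N)
        \<otimes>\<^bsub>Thompson_F\<^esub> gcomm Thompson_F (inv\<^bsub>Thompson_F\<^esub> (x2 \<otimes>\<^bsub>Thompson_F\<^esub> x1)) (a [^]\<^bsub>Thompson_F\<^esub> N)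
        = gcomm Thompson_F x1 x2"
    using KK by blast
  define w where "w = gcomm Thompson_F x1 x2"
  have wc: "w \<in> carrier Thompson_F" unfolding w_def using x1c x2c by simp
  have wn: "w \<noteq> id"
  proof
    assume "w = id"
    then have "gcomm Thompson_F x1 x2 = \<one>\<^bsub>Thompson_F\<^esub>" unfolding w_def by (simp add: one_F)
    then show False using gcomm_one_imp[OF x1c x2c] nc by blast
  qed
  have "\<exists>M. subgroup M Thompson_F \<and> w \<notin> M \<and>
       (\<forall>g\<in>carrier Thompson_F. \<exists>N::nat. 1 \<le> N \<and>
          (\<forall>m::nat. g \<otimes>\<^bsub>Thompson_F\<^esub> h [^]\<^bsub>Thompson_F\<^esub> (N * m) \<otimes>\<^bsub>Thompson_F\<^esub> inv\<^bsub>Thompson_F\<^esub> g \<in> M))"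
    using A[rule_format, OF wc wn] .
  then obtain M where MM: "subgroup M Thompson_F \<and> w \<notin> M \<and>
       (\<forall>g\<in>carrier Thompson_F. \<exists>N::nat. 1 \<le> N \<and>
          (\<forall>m::nat. g \<otimes>\<^bsub>Thompson_F\<^esub> h [^]\<^bsub>Thompson_F\<^esub> (N * m) \<otimes>\<^bsub>Thompson_F\<^esub> inv\<^bsub>Thompson_F\<^esub> g \<in> M))"
    by (elim exE)
  then have sM: "subgroup M Thompson_F" and wM: "w \<notin> M" by blast+
  have P: "\<And>g. g \<in> carrier Thompson_F \<Longrightarrow> \<exists>N::nat. 1 \<le> N \<and>
          (\<forall>m::nat. g \<otimes>\<^bsub>Thompson_F\<^esub> h [^]\<^bsub>Thompson_F\<^esub> (N * m) \<otimes>\<^bsub>Thompson_F\<^esub> inv\<^bsub>Thompson_F\<^esub> g \<in> M)"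
    using MM by blast
  define x3 where "x3 = inv\<^bsub>Thompson_F\<^esub> (x2 \<otimes>\<^bsub>Thompson_F\<^esub> x1)"
  have x3c: "x3 \<in> carrier Thompson_F" unfolding x3_def using x1c x2c by simp
  have oc: "\<one>\<^bsub>Thompson_F\<^esub> \<in> carrier Thompson_F" by simp
  obtain N0 where N0: "1 \<le> N0" "\<forall>m::nat. \<one>\<^bsub>Thompson_F\<^esub> \<otimes>\<^bsub>Thompson_F\<^esub> h [^]\<^bsub>Thompson_F\<^esub> (N0 * m) \<otimes>\<^bsub>Thompson_F\<^esub> inv\<^bsub>Thompson_F\<^esub> \<one>\<^bsub>Thompson_F\<^esub> \<in> M"
    using P[OF oc] by blast
  obtain N1 where N1: "1 \<le> N1" "\<forall>m::nat. x1 \<otimes>\<^bsub>Thompson_F\<^esub> h [^]\<^bsub>Thompson_F\<^esub> (N1 * m) \<otimes>\<^bsub>Thompson_F\<^esub> inv\<^bsub>Thompson_F\<^esub> x1 \<in> M"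
    using P[OF x1c] by blast
  obtain N2 where N2: "1 \<le> N2" "\<forall>m::nat. x2 \<otimes>\<^bsub>Thompson_F\<^esub> h [^]\<^bsub>Thompson_F\<^esub> (N2 * m) \<otimes>\<^bsub>Thompson_F\<^esub> inv\<^bsub>Thompson_F\<^esub> x2 \<in> M"
    using P[OF x2c] by blast
  obtain N3 where N3: "1 \<le> N3" "\<forall>m::nat. x3 \<otimes>\<^bsub>Thompson_F\<^esub> h [^]\<^bsub>Thompson_F\<^esub> (N3 * m) \<otimes>\<^bsub>Thompson_F\<^esub> inv\<^bsub>Thompson_F\<^esub> x3 \<in> M"
    using P[OF x3c] by blast
  define N where "N = N0 * N1 * N2 * N3"
  have N1': "1 \<le> N" unfolding N_def using N0 N1 N2 N3 by simp
  have eN: "N = N0 * (N1 * N2 * N3)" "N = N1 * (N0 * N2 * N3)" "N = N2 * (N0 * N1 * N3)" "N = N3 * (N0 * N1 * N2)"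
    unfolding N_def by (simp_all add: ac_simps)
  have hN: "g \<otimes>\<^bsub>Thompson_F\<^esub> h [^]\<^bsub>Thompson_F\<^esub> N \<otimes>\<^bsub>Thompson_F\<^esub> inv\<^bsub>Thompson_F\<^esub> g \<in> M"
    if "g \<in> {\<one>\<^bsub>Thompson_F\<^esub>, x1, x2, x3}" for g
    using that N0(2) N1(2) N2(2) N3(2) eN by (metis empty_iff insert_iff)
  define b where "b = a [^]\<^bsub>Thompson_F\<^esub> N"
  have bc: "b \<in> carrier Thompson_F" unfolding b_def using a h by auto
  have conjinv: "inv\<^bsub>Thompson_F\<^esub> (g \<otimes>\<^bsub>Thompson_F\<^esub> y \<otimes>\<^bsub>Thompson_F\<^esub> inv\<^bsub>Thompson_F\<^esub> g) =
                 g \<otimes>\<^bsub>Thompson_F\<^esub> inv\<^bsub>Thompson_F\<^esub> y \<otimes>\<^bsub>Thompson_F\<^esub> inv\<^bsub>Thompson_F\<^esub> g"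
    if "g \<in> carrier Thompson_F" "y \<in> carrier Thompson_F" for g y
    using that by (simp add: inv_mult_group m_assoc)
  have gb: "g \<otimes>\<^bsub>Thompson_F\<^esub> b \<otimes>\<^bsub>Thompson_F\<^esub> inv\<^bsub>Thompson_F\<^esub> g \<in> M"
    if g: "g \<in> {\<one>\<^bsub>Thompson_F\<^esub>, x1, x2, x3}" for g
  proof -
    have gc: "g \<in> carrier Thompson_F" using g x1c x2c x3c by auto
    show ?thesis
    proof (cases "a = h")
      case True then show ?thesis unfolding b_def using hN[OF g] by simp
    next
      case False
      then have "b = inv\<^bsub>Thompson_F\<^esub> (h [^]\<^bsub>Thompson_F\<^esub> N)" unfolding b_def using a h nat_pow_inv by auto
      then have "g \<otimes>\<^bsub>Thompson_F\<^esub> b \<otimes>\<^bsub>Thompson_F\<^esub> inv\<^bsub>Thompson_F\<^esub> g =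
          inv\<^bsub>Thompson_F\<^esub> (g \<otimes>\<^bsub>Thompson_F\<^esub> h [^]\<^bsub>Thompson_F\<^esub> N \<otimes>\<^bsub>Thompson_F\<^esub> inv\<^bsub>Thompson_F\<^esub> g)"
        using conjinv[OF gc, of "h [^]\<^bsub>Thompson_F\<^esub> N"] h by simp
      then show ?thesis using hN[OF g] subgroup.m_inv_closed[OF sM] by simp
    qed
  qed
  have bM: "b \<in> M" using gb[of "\<one>\<^bsub>Thompson_F\<^esub>"] bc by simp
  have cM: "gcomm Thompson_F g b \<in> M" if g: "g \<in> {x1, x2, x3}" for g
  proof -
    have "g \<otimes>\<^bsub>Thompson_F\<^esub> b \<otimes>\<^bsub>Thompson_F\<^esub> inv\<^bsub>Thompson_F\<^esub> g \<in> M" using gb g by auto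
    then show ?thesis unfolding gcomm_def
      using subgroup.m_closed[OF sM] subgroup.m_inv_closed[OF sM bM] by blast
  qed
  have "gcomm Thompson_F x1 b \<otimes>\<^bsub>Thompson_F\<^esub> gcomm Thompson_F x2 b \<otimes>\<^bsub>Thompson_F\<^esub> gcomm Thompson_F x3 b \<in> M"
    using cM subgroup.m_closed[OF sM] by simp
  moreover have "gcomm Thompson_F x1 b \<otimes>\<^bsub>Thompson_F\<^esub> gcomm Thompson_F x2 b \<otimes>\<^bsub>Thompson_F\<^esub> gcomm Thompson_F x3 b = w"
    unfolding b_def x3_def w_def using K[OF N1'] .
  ultimately show False using wM by simp
qed




primrec ball_graph :: "('v \<Rightarrow> 'v \<Rightarrow> bool) \<Rightarrow> 'v \<Rightarrow> nat \<Rightarrow> 'v set" where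
  "ball_graph Ed v 0 = {v}"
| "ball_graph Ed v (Suc n) = ball_graph Ed v n \<union> {y. \<exists>x\<in>ball_graph Ed v n. Ed x y}"

lemma ball_graph_sub:
  assumes "connected_locfin_graph V Ed" "v \<in> V" shows "ball_graph Ed v n \<subseteq> V"
  using assms by (induction n) (auto simp: connected_locfin_graph_def)

lemma ball_graph_finite:
  assumes G: "connected_locfin_graph V Ed" and v: "v \<in> V" shows "finite (ball_graph Ed v n)"
proof (induction n)
  case 0 then show ?case by simp
next
  case (Suc n)
  have "{y. \<exists>x\<in>ball_graph Ed v n. Ed x y} = (\<Union>x\<in>ball_graph Ed v n. {y. Ed x y})" by auto
  moreover have "finite (\<Union>x\<in>ball_graph Ed v n. {y. Ed x y})"
    using Suc ball_graph_sub[OF G v, of n] G unfolding connected_locfin_graph_def by blast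
  ultimately show ?case using Suc by simp
qed

lemma ball_graph_reach:
  assumes G: "connected_locfin_graph V Ed" and v: "v \<in> V" and t: "t \<in> V"
  shows "\<exists>n. t \<in> ball_graph Ed v n"
proof -
  obtain p where p: "p \<noteq> []" "hd p = v" "last p = t"
    "\<forall>i. Suc i < length p \<longrightarrow> Ed (p ! i) (p ! Suc i)"
    using G v t unfolding connected_locfin_graph_def graph_reachable_def by blast
  have "i < length p \<longrightarrow> p ! i \<in> ball_graph Ed v i" for i
  proof (induction i)
    case 0 then show ?case using p by (simp add: hd_conv_nth)
  next
    case (Suc i) then show ?case using p(4) by auto
  qed
  then have "p ! (length p - 1) \<in> ball_graph Ed v (length p - 1)" using p(1) by simp
  then show ?thesis using p(1,3) by (metis last_conv_nth)
qed

lemma graph_fix_power: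
  assumes G: "connected_locfin_graph V Ed" and GA: "graph_action Thompson_F V Ed \<phi>"
    and h: "h \<in> carrier Thompson_F" and v: "v \<in> V" and hv: "\<phi> h v = v" and t: "t \<in> V"
  shows "\<exists>N::nat. 1 \<le> N \<and> (\<forall>m::nat. \<phi> (h [^]\<^bsub>Thompson_F\<^esub> (N * m)) t = t)"
proof -
  interpret group Thompson_F by (rule group_F)
  interpret A: group_action Thompson_F V \<phi> using GA unfolding graph_action_def by blast
  have edge: "\<And>x y. Ed x y \<Longrightarrow> Ed (\<phi> h x) (\<phi> h y)"
    using GA G h unfolding graph_action_def connected_locfin_graph_def by blast
  obtain n where tn: "t \<in> ball_graph Ed v n" using ball_graph_reach[OF G v t] by blast
  define R where "R = ball_graph Ed v n"
  have RV: "R \<subseteq> V" unfolding R_def using ball_graph_sub[OF G v] .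
  have fR: "finite R" unfolding R_def using ball_graph_finite[OF G v] .
  have hR: "\<phi> h x \<in> ball_graph Ed v k" if "x \<in> ball_graph Ed v k" for x k
    using that
  proof (induction k arbitrary: x)
    case 0 then show ?case using hv by simp
  next
    case (Suc k)
    show ?case
    proof (cases "x \<in> ball_graph Ed v k")
      case True then show ?thesis using Suc by simp
    next
      case False
      then obtain y where y: "y \<in> ball_graph Ed v k" "Ed y x" using Suc by auto
      then show ?thesis using Suc edge by auto
    qed
  qed
  have powR: "\<phi> (h [^]\<^bsub>Thompson_F\<^esub> k) x \<in> R" if "x \<in> R" for x and k :: nat
    using that
  proof (induction k arbitrary: x)
    case 0 then show ?case using A.id_eq_one[symmetric] RV by auto
  next
    case (Suc k)
    have "\<phi> (h [^]\<^bsub>Thompson_F\<^esub> Suc k) x = \<phi> (h [^]\<^bsub>Thompson_F\<^esub> k) (\<phi> h x)"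
      using A.composition_rule[of x "h [^]\<^bsub>Thompson_F\<^esub> k" h] Suc.prems RV h by auto
    moreover have "\<phi> h x \<in> R" using hR Suc.prems unfolding R_def by blast
    ultimately show ?case using Suc.IH by simp
  qed
  define orb where "orb = (\<lambda>k::nat. \<phi> (h [^]\<^bsub>Thompson_F\<^esub> k) t)"
  have orbR: "orb ` {..card R} \<subseteq> R" unfolding orb_def using powR tn unfolding R_def by auto
  have "\<not> inj_on orb {..card R}"
  proof
    assume "inj_on orb {..card R}"
    then have "card {..card R} \<le> card R" using card_inj_on_le[OF _ orbR fR] by blast
    then show False by simp
  qed
  then obtain i j where ij: "i \<in> {..card R}" "j \<in> {..card R}" "i \<noteq> j" "orb i = orb j"
    unfolding inj_on_def by blast
  obtain i j where ij: "i < j" "orb i = orb j" using ij by (metis linorder_neqE_nat)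
  define N where "N = j - i"
  have N1: "1 \<le> N" unfolding N_def using ij by simp
  have tV: "\<phi> (h [^]\<^bsub>Thompson_F\<^esub> N) t \<in> V" using A.element_image[OF nat_pow_closed[OF h] t refl] .
  have "\<phi> (h [^]\<^bsub>Thompson_F\<^esub> i) (\<phi> (h [^]\<^bsub>Thompson_F\<^esub> N) t) = \<phi> (h [^]\<^bsub>Thompson_F\<^esub> (i + N)) t"
    using A.composition_rule[of t "h [^]\<^bsub>Thompson_F\<^esub> i" "h [^]\<^bsub>Thompson_F\<^esub> N"] t h
    by (simp add: nat_pow_mult)
  also have "\<dots> = \<phi> (h [^]\<^bsub>Thompson_F\<^esub> i) t" using ij unfolding N_def orb_def by simp
  finally have fixN: "\<phi> (h [^]\<^bsub>Thompson_F\<^esub> N) t = t"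
    using A.inj_prop[of "h [^]\<^bsub>Thompson_F\<^esub> i"] h t tV by (simp add: inj_on_def)
  have "\<phi> ((h [^]\<^bsub>Thompson_F\<^esub> N) [^]\<^bsub>Thompson_F\<^esub> m) t = t" for m :: nat
  proof (induction m)
    case 0 then show ?case using A.id_eq_one[symmetric] t by auto
  next
    case (Suc m)
    have "\<phi> ((h [^]\<^bsub>Thompson_F\<^esub> N) [^]\<^bsub>Thompson_F\<^esub> Suc m) t =
          \<phi> ((h [^]\<^bsub>Thompson_F\<^esub> N) [^]\<^bsub>Thompson_F\<^esub> m) (\<phi> (h [^]\<^bsub>Thompson_F\<^esub> N) t)"
      using A.composition_rule[of t "(h [^]\<^bsub>Thompson_F\<^esub> N) [^]\<^bsub>Thompson_F\<^esub> m" "h [^]\<^bsub>Thompson_F\<^esub> N"] t h by simp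
    then show ?case using fixN Suc by simp
  qed
  then have "\<forall>m::nat. \<phi> (h [^]\<^bsub>Thompson_F\<^esub> (N * m)) t = t" using h by (simp add: nat_pow_pow)
  then show ?thesis using N1 by blast
qed

lemma graph_part:
  assumes G: "connected_locfin_graph V Ed" and GA: "graph_action Thompson_F V Ed \<phi>"
    and inj: "inj_on \<phi> (carrier Thompson_F)"
    and g: "g \<in> carrier Thompson_F" and v: "v \<in> V" and gv: "\<phi> g v = v"
  shows "g = \<one>\<^bsub>Thompson_F\<^esub>"
proof (rule ccontr)
  interpret group Thompson_F by (rule group_F)
  interpret A: group_action Thompson_F V \<phi> using GA unfolding graph_action_def by blast
  assume "g \<noteq> \<one>\<^bsub>Thompson_F\<^esub>"
  then have gid: "g \<noteq> id" by (simp add: one_F)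
  show False
  proof (rule abstract_main[OF g gid], intro ballI impI)
    fix w assume wc: "w \<in> carrier Thompson_F" and wid: "w \<noteq> id"
    have "w \<noteq> \<one>\<^bsub>Thompson_F\<^esub>" using wid by (simp add: one_F)
    then have ne: "\<phi> w \<noteq> \<phi> \<one>\<^bsub>Thompson_F\<^esub>" using inj wc by (meson inj_on_eq_iff one_closed)
    obtain u where u: "u \<in> V" "\<phi> w u \<noteq> u"
    proof (rule ccontr)
      assume "\<not> thesis"
      then have fix_all: "\<forall>u\<in>V. \<phi> w u = u" using that by blast
      have ext: "\<phi> w \<in> extensional V" using A.bij_prop0[OF wc] by (simp add: Bij_def)
      have "\<phi> w = (\<lambda>x\<in>V. x)"
      proof
        fix x show "\<phi> w x = (\<lambda>x\<in>V. x) x"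
          using fix_all ext by (cases "x \<in> V") (auto simp: extensional_def)
      qed
      then show False using ne A.id_eq_one by simp
    qed
    define M where "M = stabilizer Thompson_F \<phi> u"
    have sM: "subgroup M Thompson_F" unfolding M_def by (rule A.stabilizer_subgroup[OF u(1)])
    have wM: "w \<notin> M" unfolding M_def stabilizer_def using u by simp
    have P: "\<exists>N::nat. 1 \<le> N \<and>
          (\<forall>m::nat. g' \<otimes>\<^bsub>Thompson_F\<^esub> g [^]\<^bsub>Thompson_F\<^esub> (N * m) \<otimes>\<^bsub>Thompson_F\<^esub> inv\<^bsub>Thompson_F\<^esub> g' \<in> M)"
      if g': "g' \<in> carrier Thompson_F" for g'
    proof -
      define t where "t = \<phi> (inv\<^bsub>Thompson_F\<^esub> g') u"
      have tV: "t \<in> V" unfolding t_def using A.element_image[OF inv_closed[OF g'] u(1) refl] .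
      obtain N where N: "1 \<le> N" "\<forall>m::nat. \<phi> (g [^]\<^bsub>Thompson_F\<^esub> (N * m)) t = t"
        using graph_fix_power[OF G GA g v gv tV] by blast
      have "g' \<otimes>\<^bsub>Thompson_F\<^esub> g [^]\<^bsub>Thompson_F\<^esub> (N * m) \<otimes>\<^bsub>Thompson_F\<^esub> inv\<^bsub>Thompson_F\<^esub> g' \<in> M" for m :: nat
      proof -
        define y where "y = g [^]\<^bsub>Thompson_F\<^esub> (N * m)"
        have yc: "y \<in> carrier Thompson_F" unfolding y_def using g by simp
        have "\<phi> (g' \<otimes>\<^bsub>Thompson_F\<^esub> y \<otimes>\<^bsub>Thompson_F\<^esub> inv\<^bsub>Thompson_F\<^esub> g') u
            = \<phi> (g' \<otimes>\<^bsub>Thompson_F\<^esub> y) t"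
          unfolding t_def using A.composition_rule[OF u(1), of "g' \<otimes>\<^bsub>Thompson_F\<^esub> y" "inv\<^bsub>Thompson_F\<^esub> g'"] g' yc by simp
        also have "\<dots> = \<phi> g' (\<phi> y t)" using A.composition_rule[OF tV g' yc] .
        also have "\<phi> y t = t" unfolding y_def using N by blast
        also have "\<phi> g' t = \<phi> (g' \<otimes>\<^bsub>Thompson_F\<^esub> inv\<^bsub>Thompson_F\<^esub> g') u"
          unfolding t_def using A.composition_rule[OF u(1) g' inv_closed[OF g']] by simp
        also have "\<dots> = u" using g' u(1) A.id_eq_one[symmetric] by simp
        finally show ?thesis unfolding M_def stabilizer_def y_def[symmetric] using g' yc by simp
      qed
      then show ?thesis using N(1) by blast
    qed
    show "\<exists>M. subgroup M Thompson_F \<and> w \<notin> M \<and>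
       (\<forall>g'\<in>carrier Thompson_F. \<exists>N::nat. 1 \<le> N \<and>
          (\<forall>m::nat. g' \<otimes>\<^bsub>Thompson_F\<^esub> g [^]\<^bsub>Thompson_F\<^esub> (N * m) \<otimes>\<^bsub>Thompson_F\<^esub> inv\<^bsub>Thompson_F\<^esub> g' \<in> M))"
      using sM wM P by blast
  qed
qed




lemma (in group) tdlc_lmult_cont:
  assumes TD: "tdlc_group G T" and a: "a \<in> carrier G"
  shows "continuous_map T T (\<lambda>x. a \<otimes> x)"
proof -
  have ts: "topspace T = carrier G" and m: "continuous_map (prod_topology T T) T (\<lambda>(x, y). x \<otimes> y)"
    using TD unfolding tdlc_group_def by auto
  have "continuous_map T (prod_topology T T) (\<lambda>x. (a, x))"
    using a ts by (intro continuous_map_pairedI) auto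
  from continuous_map_compose[OF this m] show ?thesis by (simp add: o_def)
qed

lemma (in group) tdlc_rmult_cont:
  assumes TD: "tdlc_group G T" and a: "a \<in> carrier G"
  shows "continuous_map T T (\<lambda>x. x \<otimes> a)"
proof -
  have ts: "topspace T = carrier G" and m: "continuous_map (prod_topology T T) T (\<lambda>(x, y). x \<otimes> y)"
    using TD unfolding tdlc_group_def by auto
  have "continuous_map T (prod_topology T T) (\<lambda>x. (x, a))"
    using a ts by (intro continuous_map_pairedI) auto
  from continuous_map_compose[OF this m] show ?thesis by (simp add: o_def)
qed

lemma (in group) tdlc_conj_open_subgroup:
  assumes TD: "tdlc_group G T" and g: "g \<in> carrier G" and sM: "subgroup M G" and oM: "openin T M"
  shows "subgroup {x \<in> carrier G. g \<otimes> x \<otimes> inv g \<in> M} G \<and>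
         openin T {x \<in> carrier G. g \<otimes> x \<otimes> inv g \<in> M}"
proof
  have ts: "topspace T = carrier G" using TD unfolding tdlc_group_def by auto
  have "continuous_map T T ((\<lambda>x. x \<otimes> inv g) \<circ> (\<lambda>x. g \<otimes> x))"
    using tdlc_lmult_cont[OF TD g] tdlc_rmult_cont[OF TD inv_closed[OF g]] by (rule continuous_map_compose)
  then have "openin T {x \<in> topspace T. ((\<lambda>x. x \<otimes> inv g) \<circ> (\<lambda>x. g \<otimes> x)) x \<in> M}"
    using oM by (rule openin_continuous_map_preimage)
  then show "openin T {x \<in> carrier G. g \<otimes> x \<otimes> inv g \<in> M}" using ts by simp
  show "subgroup {x \<in> carrier G. g \<otimes> x \<otimes> inv g \<in> M} G"
  proof (rule subgroupI)
    show "{x \<in> carrier G. g \<otimes> x \<otimes> inv g \<in> M} \<subseteq> carrier G" by auto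
    show "{x \<in> carrier G. g \<otimes> x \<otimes> inv g \<in> M} \<noteq> {}"
    proof -
      have "\<one> \<in> {x \<in> carrier G. g \<otimes> x \<otimes> inv g \<in> M}" using g subgroup.one_closed[OF sM] by simp
      then show ?thesis by blast
    qed
  next
    fix a assume "a \<in> {x \<in> carrier G. g \<otimes> x \<otimes> inv g \<in> M}"
    then have a: "a \<in> carrier G" "g \<otimes> a \<otimes> inv g \<in> M" by auto
    have "inv (g \<otimes> a \<otimes> inv g) = g \<otimes> inv a \<otimes> inv g" using a g by (simp add: inv_mult_group m_assoc)
    then show "inv a \<in> {x \<in> carrier G. g \<otimes> x \<otimes> inv g \<in> M}"
      using subgroup.m_inv_closed[OF sM a(2)] a by simp
  next
    fix a b assume "a \<in> {x \<in> carrier G. g \<otimes> x \<otimes> inv g \<in> M}" "b \<in> {x \<in> carrier G. g \<otimes> x \<otimes> inv g \<in> M}"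
    then have a: "a \<in> carrier G" "g \<otimes> a \<otimes> inv g \<in> M" and b: "b \<in> carrier G" "g \<otimes> b \<otimes> inv g \<in> M" by auto
    have "(g \<otimes> a \<otimes> inv g) \<otimes> (g \<otimes> b \<otimes> inv g) = g \<otimes> (a \<otimes> b) \<otimes> inv g" using a b g by (simp add: m_assoc)
    then show "a \<otimes> b \<in> {x \<in> carrier G. g \<otimes> x \<otimes> inv g \<in> M}"
      using subgroup.m_closed[OF sM a(2) b(2)] a b by simp
  qed
qed

lemma (in group) tdlc_power_in_open:
  assumes TD: "tdlc_group G T" and cK: "compactin T K" and sK: "subgroup K G"
    and sM: "subgroup M G" and oM: "openin T M" and z: "z \<in> K"
  shows "\<exists>N::nat. 1 \<le> N \<and> z [^] N \<in> M"
proof -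
  have ts: "topspace T = carrier G" using TD unfolding tdlc_group_def by auto
  have Kc: "K \<subseteq> carrier G" using subgroup.subset[OF sK] .
  define Vk where "Vk = (\<lambda>k. {x \<in> topspace T. inv k \<otimes> x \<in> M})"
  have oV: "openin T (Vk k)" if "k \<in> K" for k
    unfolding Vk_def using tdlc_lmult_cont[OF TD inv_closed[of k]] that Kc oM
    by (intro openin_continuous_map_preimage) auto
  have cov: "K \<subseteq> \<Union> (Vk ` K)"
  proof
    fix k assume "k \<in> K"
    then have "k \<in> Vk k" unfolding Vk_def using Kc ts subgroup.one_closed[OF sM] by auto
    then show "k \<in> \<Union> (Vk ` K)" using \<open>k \<in> K\<close> by blast
  qed
  obtain F where F: "finite F" "F \<subseteq> Vk ` K" "K \<subseteq> \<Union> F"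
    using cK cov oV unfolding compactin_def by (metis (no_types, lifting) imageE)
  have zc: "z \<in> carrier G" using z Kc by auto
  have zK: "z [^] n \<in> K" for n :: nat
    by (induction n) (auto simp: subgroup.one_closed[OF sK] subgroup.m_closed[OF sK] z)
  define sel where "sel = (\<lambda>n::nat. SOME C. C \<in> F \<and> z [^] n \<in> C)"
  have selF: "sel n \<in> F \<and> z [^] n \<in> sel n" for n
  proof -
    have "\<exists>C. C \<in> F \<and> z [^] n \<in> C" using F(3) zK[of n] by blast
    then show ?thesis unfolding sel_def by (rule someI_ex)
  qed
  have "\<not> inj_on sel {..card F}"
  proof
    assume "inj_on sel {..card F}"
    moreover have "sel ` {..card F} \<subseteq> F" using selF by auto
    ultimately have "card {..card F} \<le> card F" using card_inj_on_le F(1) by blast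
    then show False by simp
  qed
  then obtain i j where ij0: "i \<noteq> j" "sel i = sel j" unfolding inj_on_def by blast
  obtain i j where ij: "i < j" "sel i = sel j" using ij0 by (metis linorder_neqE_nat)
  obtain k where k: "k \<in> K" "sel i = Vk k" using selF[of i] F(2) by blast
  have kc: "k \<in> carrier G" using k Kc by auto
  have mi: "inv k \<otimes> z [^] i \<in> M" using selF[of i] k unfolding Vk_def by auto
  have mj: "inv k \<otimes> z [^] j \<in> M" using selF[of j] k ij unfolding Vk_def by auto
  have e1: "inv (inv k \<otimes> z [^] i) \<otimes> (inv k \<otimes> z [^] j) = inv (z [^] i) \<otimes> z [^] j"
    using kc zc by (simp add: inv_mult_group m_assoc)
  have e2: "z [^] j = z [^] i \<otimes> z [^] (j - i)" using zc ij by (simp add: nat_pow_mult)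
  have e3: "inv (z [^] i) \<otimes> (z [^] i \<otimes> z [^] (j - i)) = z [^] (j - i)" using zc by (simp add: m_assoc[symmetric])
  have "inv (inv k \<otimes> z [^] i) \<otimes> (inv k \<otimes> z [^] j) = z [^] (j - i)" using e1 e2 e3 by simp
  moreover have "inv (inv k \<otimes> z [^] i) \<otimes> (inv k \<otimes> z [^] j) \<in> M"
    using subgroup.m_closed[OF sM subgroup.m_inv_closed[OF sM mi] mj] .
  ultimately have "z [^] (j - i) \<in> M" by simp
  then show ?thesis using ij by (intro exI[of _ "j - i"]) auto
qed




lemma (in group) tdlc_separating_subgroup:
  assumes TD: "tdlc_group G T" and cos: "compact_open_subgroup K G T"
    and y: "y \<in> carrier G" and y1: "y \<noteq> \<one>"
  shows "\<exists>M. subgroup M G \<and> openin T M \<and> y \<notin> M"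
proof (cases "y \<in> K")
  case False then show ?thesis using cos unfolding compact_open_subgroup_def by blast
next
  case yK: True
  have ts: "topspace T = carrier G" using TD unfolding tdlc_group_def by auto
  have sK: "subgroup K G" and oK: "openin T K" and cK: "compactin T K"
    using cos unfolding compact_open_subgroup_def by auto
  have Kc: "K \<subseteq> carrier G" using subgroup.subset[OF sK] .
  have mcont: "continuous_map (prod_topology T T) T (\<lambda>(x, y). x \<otimes> y)"
    and icont: "continuous_map T T (\<lambda>x. inv x)" and Hs: "Hausdorff_space T"
    and tdis: "totally_disconnected_space T"
    using TD unfolding tdlc_group_def by auto
  define X where "X = subtopology T K"
  have tX: "topspace X = K" unfolding X_def using Kc ts by auto
  have cX: "compact_space X" unfolding X_def using compact_space_subtopology[OF cK] .
  have hX: "Hausdorff_space X" unfolding X_def using Hausdorff_space_subtopology[OF Hs] .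
  have oneK: "\<one> \<in> K" using subgroup.one_closed[OF sK] .
  have nq: "\<not> quasi_component_of X \<one> y"
  proof
    assume "quasi_component_of X \<one> y"
    then have "connected_component_of X \<one> y" using quasi_eq_connected_component_of[of X] cX hX by simp
    then obtain S where S: "connectedin X S" "\<one> \<in> S" "y \<in> S" unfolding connected_component_of_def by blast
    then have "connectedin T S" unfolding X_def using connectedin_subtopology by blast
    then obtain a where "S \<subseteq> {a}" using tdis unfolding totally_disconnected_space_def by blast
    then show False using S y1 by auto
  qed
  then obtain C0 where C0: "closedin X C0" "openin X C0" "\<not> (\<one> \<in> C0 \<longleftrightarrow> y \<in> C0)"
    unfolding quasi_component_of_def using tX oneK yK by blast
  obtain C where C: "closedin X C" "openin X C" "\<one> \<in> C" "y \<notin> C"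
  proof (cases "\<one> \<in> C0")
    case True then show ?thesis using that C0 by blast
  next
    case False
    have "closedin X (topspace X - C0)" using C0(2) by (simp add: closedin_diff)
    moreover have "openin X (topspace X - C0)" using C0(1) by (simp add: openin_diff)
    ultimately show ?thesis using that[of "topspace X - C0"] C0 False tX oneK yK by auto
  qed
  have CK: "C \<subseteq> K" using closedin_subset[OF C(1)] tX by simp
  have Cc: "C \<subseteq> carrier G" using CK Kc by auto
  have oC: "openin T C" using C(2) oK unfolding X_def by (rule openin_trans_full)
  have cC: "compactin T C"
    using closedin_compact_space[OF cX C(1)] unfolding X_def compactin_subtopology by blast
  define W where "W = {p \<in> topspace (prod_topology T T). (\<lambda>(x, y). x \<otimes> y) p \<in> C}"
  have oW: "openin (prod_topology T T) W" unfolding W_def using mcont oC by (rule openin_continuous_map_preimage)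
  have "C \<times> {\<one>} \<subseteq> W" unfolding W_def using Cc ts by auto
  then obtain U V where UV: "openin T U" "openin T V" "C \<subseteq> U" "\<one> \<in> V" "U \<times> V \<subseteq> W"
    using tube_lemma_left[OF oW cC, of \<one>] ts by auto
  have Vc: "V \<subseteq> carrier G" using openin_subset[OF UV(2)] ts by simp
  have CV: "c \<otimes> v \<in> C" if "c \<in> C" "v \<in> V" for c v
  proof -
    have "(c, v) \<in> W" using UV(3,5) that by blast
    then show ?thesis unfolding W_def by simp
  qed
  define V' where "V' = {x \<in> topspace T. inv x \<in> V} \<inter> V"
  have oV': "openin T V'" unfolding V'_def
    using openin_continuous_map_preimage[OF icont UV(2)] UV(2) by (rule openin_Int)
  have V'c: "V' \<subseteq> carrier G" "\<And>v. v \<in> V' \<Longrightarrow> v \<in> V \<and> inv v \<in> V" unfolding V'_def using Vc by auto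
  have oneV': "\<one> \<in> V'" unfolding V'_def using UV(4) ts by simp
  define M where "M = {x \<in> carrier G. (\<forall>c\<in>C. c \<otimes> x \<in> C) \<and> (\<forall>c\<in>C. c \<otimes> inv x \<in> C)}"
  have sM: "subgroup M G"
  proof (rule subgroupI)
    show "M \<subseteq> carrier G" unfolding M_def by auto
    have "\<one> \<in> M" unfolding M_def using Cc by auto
    then show "M \<noteq> {}" by blast
  next
    fix a assume "a \<in> M" then show "inv a \<in> M" unfolding M_def by auto
  next
    fix a b assume a: "a \<in> M" and b: "b \<in> M"
    have ac: "a \<in> carrier G" and bc: "b \<in> carrier G" using a b unfolding M_def by auto
    have "c \<otimes> (a \<otimes> b) \<in> C" if "c \<in> C" for c
    proof -
      have "c \<otimes> a \<in> C" using a that unfolding M_def by auto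
      then have "c \<otimes> a \<otimes> b \<in> C" using b unfolding M_def by auto
      moreover have "c \<in> carrier G" using that Cc by blast
      ultimately show ?thesis using ac bc by (simp add: m_assoc)
    qed
    moreover have "c \<otimes> inv (a \<otimes> b) \<in> C" if "c \<in> C" for c
    proof -
      have "c \<otimes> inv b \<in> C" using b that unfolding M_def by auto
      then have "c \<otimes> inv b \<otimes> inv a \<in> C" using a unfolding M_def by auto
      moreover have "c \<in> carrier G" using that Cc by blast
      ultimately show ?thesis using ac bc by (simp add: m_assoc inv_mult_group)
    qed
    ultimately show "a \<otimes> b \<in> M" unfolding M_def using ac bc by auto
  qed
  have yM: "y \<notin> M"
  proof
    assume "y \<in> M"
    then have "\<one> \<otimes> y \<in> C" using C(3) unfolding M_def by blast
    then show False using C(4) y by simp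
  qed
  have oM: "openin T M"
    unfolding openin_subopen[of T M]
  proof
    fix x assume xM: "x \<in> M"
    have xc: "x \<in> carrier G" using xM unfolding M_def by auto
    define U' where "U' = {z \<in> topspace T. inv x \<otimes> z \<in> V'}"
    have oU': "openin T U'" unfolding U'_def
      using tdlc_lmult_cont[OF TD inv_closed[OF xc]] oV' by (rule openin_continuous_map_preimage)
    have xU': "x \<in> U'" unfolding U'_def using xc ts oneV' by simp
    have "U' \<subseteq> M"
    proof
      fix z assume "z \<in> U'"
      then have zc: "z \<in> carrier G" and vz: "inv x \<otimes> z \<in> V'" unfolding U'_def using ts by auto
      define v where "v = inv x \<otimes> z"
      have vc: "v \<in> carrier G" unfolding v_def using xc zc by simp
      have zv: "z = x \<otimes> v" unfolding v_def using xc zc by (simp add: m_assoc[symmetric])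
      have vV: "v \<in> V" "inv v \<in> V" using V'c(2) vz unfolding v_def by auto
      have "c \<otimes> z \<in> C" if c: "c \<in> C" for c
      proof -
        have "c \<otimes> x \<in> C" using xM c unfolding M_def by auto
        then have "c \<otimes> x \<otimes> v \<in> C" using CV vV by blast
        moreover have "c \<in> carrier G" using c Cc by blast
        ultimately show ?thesis using zv xc vc by (simp add: m_assoc)
      qed
      moreover have "c \<otimes> inv z \<in> C" if c: "c \<in> C" for c
      proof -
        have "c \<otimes> inv v \<in> C" using CV c vV by blast
        then have "c \<otimes> inv v \<otimes> inv x \<in> C" using xM unfolding M_def by auto
        moreover have "c \<in> carrier G" using c Cc by blast
        ultimately show ?thesis using zv xc vc by (simp add: m_assoc inv_mult_group)
      qed
      ultimately show "z \<in> M" unfolding M_def using zc by auto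
    qed
    then show "\<exists>T'. openin T T' \<and> x \<in> T' \<and> T' \<subseteq> M" using oU' xU' by blast
  qed
  show ?thesis using sM oM yM by blast
qed




lemma subgroup_pow_closed: "subgroup S G \<Longrightarrow> x \<in> S \<Longrightarrow> x [^]\<^bsub>G\<^esub> (n::nat) \<in> S"
  by (induction n) (auto simp: subgroup.one_closed subgroup.m_closed)

lemma tdlc_part:
  fixes H :: "'h monoid" and T :: "'h topology"
  assumes TD: "tdlc_group H T" and hom: "\<psi> \<in> hom Thompson_F H" and inj: "inj_on \<psi> (carrier Thompson_F)"
    and cos: "compact_open_subgroup K H T"
  shows "\<psi> ` carrier Thompson_F \<inter> K = {\<one>\<^bsub>H\<^esub>}"
proof -
  have gF: "group Thompson_F" by (rule group_F)
  have gH: "group H" using TD unfolding tdlc_group_def by blast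
  have gh: "group_hom Thompson_F H \<psi>" using gF gH hom by (simp add: group_hom_def group_hom_axioms_def)
  interpret F: group Thompson_F by (rule gF)
  interpret HH: group H by (rule gH)
  have sK: "subgroup K H" and oK: "openin T K" and cK: "compactin T K"
    using cos unfolding compact_open_subgroup_def by auto
  have psi1: "\<psi> \<one>\<^bsub>Thompson_F\<^esub> = \<one>\<^bsub>H\<^esub>" using hom_one[OF hom gF gH] .
  have psic: "\<And>x. x \<in> carrier Thompson_F \<Longrightarrow> \<psi> x \<in> carrier H" using hom unfolding hom_def by auto
  have psim: "\<And>x y. x \<in> carrier Thompson_F \<Longrightarrow> y \<in> carrier Thompson_F \<Longrightarrow>
      \<psi> (x \<otimes>\<^bsub>Thompson_F\<^esub> y) = \<psi> x \<otimes>\<^bsub>H\<^esub> \<psi> y" using hom_mult[OF hom] by blast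
  have psii: "\<And>x. x \<in> carrier Thompson_F \<Longrightarrow> \<psi> (inv\<^bsub>Thompson_F\<^esub> x) = inv\<^bsub>H\<^esub> (\<psi> x)"
    using group_hom.hom_inv[OF gh] by blast
  have psip: "\<And>x n. x \<in> carrier Thompson_F \<Longrightarrow> \<psi> (x [^]\<^bsub>Thompson_F\<^esub> (n::nat)) = \<psi> x [^]\<^bsub>H\<^esub> n"
    using hom_nat_pow[OF hom _ gF gH] by blast
  have sup: "{\<one>\<^bsub>H\<^esub>} \<subseteq> \<psi> ` carrier Thompson_F \<inter> K"
    using psi1 F.one_closed subgroup.one_closed[OF sK] by (metis Int_iff empty_subsetI image_eqI insert_subset)
  have sub: "z = \<one>\<^bsub>H\<^esub>" if z: "z \<in> \<psi> ` carrier Thompson_F \<inter> K" for z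
  proof -
    obtain h where h: "h \<in> carrier Thompson_F" "z = \<psi> h" using z by blast
    have zK: "\<psi> h \<in> K" using z h(2) by simp
    show ?thesis
    proof (rule ccontr)
      assume "z \<noteq> \<one>\<^bsub>H\<^esub>"
      then have "h \<noteq> \<one>\<^bsub>Thompson_F\<^esub>" using h psi1 by auto
      then have hid: "h \<noteq> id" by (simp add: one_F)
      show False
      proof (rule abstract_main[OF h(1) hid], intro ballI impI)
        fix w assume wc: "w \<in> carrier Thompson_F" and wid: "w \<noteq> id"
        have "w \<noteq> \<one>\<^bsub>Thompson_F\<^esub>" using wid by (simp add: one_F)
        then have psw: "\<psi> w \<noteq> \<one>\<^bsub>H\<^esub>" using inj wc psi1 F.one_closed by (metis inj_on_eq_iff)
        obtain MH where sMH: "subgroup MH H" and oMH: "openin T MH" and wMH: "\<psi> w \<notin> MH"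
          using HH.tdlc_separating_subgroup[OF TD cos psic[OF wc] psw] by blast
        define M where "M = {g \<in> carrier Thompson_F. \<psi> g \<in> MH}"
        have sM: "subgroup M Thompson_F"
        proof (rule F.subgroupI)
          show "M \<subseteq> carrier Thompson_F" unfolding M_def by auto
          have "\<one>\<^bsub>Thompson_F\<^esub> \<in> M" unfolding M_def using psi1 subgroup.one_closed[OF sMH] by simp
          then show "M \<noteq> {}" by blast
        next
          fix a assume "a \<in> M" then show "inv\<^bsub>Thompson_F\<^esub> a \<in> M"
            unfolding M_def using psii subgroup.m_inv_closed[OF sMH] by auto
        next
          fix a b assume "a \<in> M" "b \<in> M" then show "a \<otimes>\<^bsub>Thompson_F\<^esub> b \<in> M"
            unfolding M_def using psim subgroup.m_closed[OF sMH] by auto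
        qed
        have wM: "w \<notin> M" unfolding M_def using wMH by simp
        have P: "\<exists>N::nat. 1 \<le> N \<and>
          (\<forall>m::nat. g \<otimes>\<^bsub>Thompson_F\<^esub> h [^]\<^bsub>Thompson_F\<^esub> (N * m) \<otimes>\<^bsub>Thompson_F\<^esub> inv\<^bsub>Thompson_F\<^esub> g \<in> M)"
          if gc: "g \<in> carrier Thompson_F" for g
        proof -
          define MH' where "MH' = {x \<in> carrier H. \<psi> g \<otimes>\<^bsub>H\<^esub> x \<otimes>\<^bsub>H\<^esub> inv\<^bsub>H\<^esub> (\<psi> g) \<in> MH}"
          have sMH': "subgroup MH' H" and oMH': "openin T MH'"
            unfolding MH'_def using HH.tdlc_conj_open_subgroup[OF TD psic[OF gc] sMH oMH] by auto
          obtain N :: nat where N: "1 \<le> N" "\<psi> h [^]\<^bsub>H\<^esub> N \<in> MH'"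
            using HH.tdlc_power_in_open[OF TD cK sK sMH' oMH' zK] by blast
          have "g \<otimes>\<^bsub>Thompson_F\<^esub> h [^]\<^bsub>Thompson_F\<^esub> (N * m) \<otimes>\<^bsub>Thompson_F\<^esub> inv\<^bsub>Thompson_F\<^esub> g \<in> M" for m :: nat
          proof -
            have "(\<psi> h [^]\<^bsub>H\<^esub> N) [^]\<^bsub>H\<^esub> m \<in> MH'" using subgroup_pow_closed[OF sMH' N(2)] .
            then have "\<psi> h [^]\<^bsub>H\<^esub> (N * m) \<in> MH'" using psic[OF h(1)] by (simp add: HH.nat_pow_pow)
            then have "\<psi> g \<otimes>\<^bsub>H\<^esub> \<psi> h [^]\<^bsub>H\<^esub> (N * m) \<otimes>\<^bsub>H\<^esub> inv\<^bsub>H\<^esub> (\<psi> g) \<in> MH"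
              unfolding MH'_def by blast
            moreover have "\<psi> (g \<otimes>\<^bsub>Thompson_F\<^esub> h [^]\<^bsub>Thompson_F\<^esub> (N * m) \<otimes>\<^bsub>Thompson_F\<^esub> inv\<^bsub>Thompson_F\<^esub> g)
                = \<psi> g \<otimes>\<^bsub>H\<^esub> \<psi> h [^]\<^bsub>H\<^esub> (N * m) \<otimes>\<^bsub>H\<^esub> inv\<^bsub>H\<^esub> (\<psi> g)"
              using gc h(1) by (simp add: psim psii psip)
            ultimately show ?thesis unfolding M_def using gc h(1) by simp
          qed
          then show ?thesis using N(1) by blast
        qed
        show "\<exists>M. subgroup M Thompson_F \<and> w \<notin> M \<and>
          (\<forall>g\<in>carrier Thompson_F. \<exists>N::nat. 1 \<le> N \<and>
            (\<forall>m::nat. g \<otimes>\<^bsub>Thompson_F\<^esub> h [^]\<^bsub>Thompson_F\<^esub> (N * m) \<otimes>\<^bsub>Thompson_F\<^esub> inv\<^bsub>Thompson_F\<^esub> g \<in> M))"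
          using sM wM P by blast
      qed
    qed
  qed
  show ?thesis using sup sub by blast
qed

theorem mainTheorem10:
  shows "(\<forall>(H :: 'h monoid) (T :: 'h topology) \<psi>.
            tdlc_group H T \<and> \<psi> \<in> hom Thompson_F H \<and> inj_on \<psi> (carrier Thompson_F) \<longrightarrow>
            (\<forall>K. compact_open_subgroup K H T \<longrightarrow> \<psi> ` carrier Thompson_F \<inter> K = {\<one>\<^bsub>H\<^esub>}))
       \<and> (\<forall>(V :: 'v set) Ed \<phi>.
            connected_locfin_graph V Ed \<and> graph_action Thompson_F V Ed \<phi> \<and>
            inj_on \<phi> (carrier Thompson_F) \<longrightarrow>
            (\<forall>g\<in>carrier Thompson_F. \<forall>v\<in>V. \<phi> g v = v \<longrightarrow> g = \<one>\<^bsub>Thompson_F\<^esub>))"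
proof (intro conjI allI impI ballI)
  fix H :: "'h monoid" and T :: "'h topology" and \<psi> K
  assume a: "tdlc_group H T \<and> \<psi> \<in> hom Thompson_F H \<and> inj_on \<psi> (carrier Thompson_F)"
    and k: "compact_open_subgroup K H T"
  show "\<psi> ` carrier Thompson_F \<inter> K = {\<one>\<^bsub>H\<^esub>}"
    using tdlc_part[of H T \<psi> K] a k by blast
next
  fix V :: "'v set" and Ed \<phi> g v
  assume a: "connected_locfin_graph V Ed \<and> graph_action Thompson_F V Ed \<phi> \<and> inj_on \<phi> (carrier Thompson_F)"
    and g: "g \<in> carrier Thompson_F" and v: "v \<in> V" and gv: "\<phi> g v = v"
  show "g = \<one>\<^bsub>Thompson_F\<^esub>"
    using a graph_part[of V Ed \<phi> g v] g v gv by blast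
qed


end
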